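(* Let $\mathcal{A}$ be a real invertible $d\times d$ matrix and let $f\in L^2(\mathbb{R}^d)$, $f\neq0$, have compact support. Then: (i) $\tau_{\mathcal{A}}(f)=\{T_{\mathcal{A}k}f\}_{k\in\mathbb{Z}^d}$ is a Bessel sequence; (ii) $\tau_{\mathcal{A}}(f)$ cannot be an overcomplete frame sequence: if $\tau_{\mathcal{A}}(f)$ is a frame sequence, then it is a Riesz sequence, i.e. a Riesz basis (exact frame) for $\overline{\operatorname{span}}\,\tau_{\mathcal{A}}(f)$.
   Context: $T_yf(x)=f(x-y)$. A frame sequence is a sequence that is a frame for its closed linear span; it is overcomplete if it remains a frame for that span after deleting some single element. A Riesz sequence $\{g_k\}$ satisfies $A\sum|c_k|^2\le\|\sum c_kg_k\|^2\le B\sum|c_k|^2$ for some $A,B>0$ and all finitely supported $\{c_k\}$. *)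

theory Defs
  imports "HOL-Analysis.Analysis"
begin

text \<open>Elements of L2 are represented by (Borel measurable, square integrable)
  complex-valued functions on a Euclidean space with Lebesgue-Borel measure.\<close>

definition L2 :: "('a::euclidean_space \<Rightarrow> complex) set" where
  "L2 = {h. h \<in> borel_measurable lborel \<and> integrable lborel (\<lambda>x. (cmod (h x))\<^sup>2)}"

definition l2ip :: "('a::euclidean_space \<Rightarrow> complex) \<Rightarrow> ('a \<Rightarrow> complex) \<Rightarrow> complex" where
  "l2ip h g = (LINT x|lborel. h x * cnj (g x))"

definition l2norm :: "('a::euclidean_space \<Rightarrow> complex) \<Rightarrow> real" where
  "l2norm h = sqrt (LINT x|lborel. (cmod (h x))\<^sup>2)"

definition transl :: "'a::euclidean_space \<Rightarrow> ('a \<Rightarrow> complex) \<Rightarrow> ('a \<Rightarrow> complex)" where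
  "transl y f = (\<lambda>x. f (x - y))"

definition closed_span :: "('i \<Rightarrow> 'a::euclidean_space \<Rightarrow> complex) \<Rightarrow> 'i set \<Rightarrow> ('a \<Rightarrow> complex) set" where
  "closed_span g I = {h \<in> L2. \<forall>e>0. \<exists>F c. finite F \<and> F \<subseteq> I \<and>
      l2norm (\<lambda>x. h x - (\<Sum>k\<in>F. c k * g k x)) < e}"

definition bessel_seq :: "('i \<Rightarrow> 'a::euclidean_space \<Rightarrow> complex) \<Rightarrow> 'i set \<Rightarrow> bool" where
  "bessel_seq g I \<longleftrightarrow> (\<forall>k\<in>I. g k \<in> L2) \<and>
     (\<exists>B. \<forall>h\<in>L2. (\<lambda>k. (cmod (l2ip h (g k)))\<^sup>2) summable_on I \<and>
        (\<Sum>\<^sub>\<infinity>k\<in>I. (cmod (l2ip h (g k)))\<^sup>2) \<le> B * (l2norm h)\<^sup>2)"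

definition frame_for :: "('i \<Rightarrow> 'a::euclidean_space \<Rightarrow> complex) \<Rightarrow> 'i set \<Rightarrow> ('a \<Rightarrow> complex) set \<Rightarrow> bool" where
  "frame_for g I S \<longleftrightarrow> (\<exists>A B. A > 0 \<and> B > 0 \<and> (\<forall>h\<in>S.
      (\<lambda>k. (cmod (l2ip h (g k)))\<^sup>2) summable_on I \<and>
      A * (l2norm h)\<^sup>2 \<le> (\<Sum>\<^sub>\<infinity>k\<in>I. (cmod (l2ip h (g k)))\<^sup>2) \<and>
      (\<Sum>\<^sub>\<infinity>k\<in>I. (cmod (l2ip h (g k)))\<^sup>2) \<le> B * (l2norm h)\<^sup>2))"

definition frame_seq :: "('i \<Rightarrow> 'a::euclidean_space \<Rightarrow> complex) \<Rightarrow> 'i set \<Rightarrow> bool" where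
  "frame_seq g I \<longleftrightarrow> (\<forall>k\<in>I. g k \<in> L2) \<and> frame_for g I (closed_span g I)"

definition overcomplete_frame_seq :: "('i \<Rightarrow> 'a::euclidean_space \<Rightarrow> complex) \<Rightarrow> 'i set \<Rightarrow> bool" where
  "overcomplete_frame_seq g I \<longleftrightarrow> frame_seq g I \<and>
     (\<exists>j\<in>I. frame_for g (I - {j}) (closed_span g I))"

definition riesz_seq :: "('i \<Rightarrow> 'a::euclidean_space \<Rightarrow> complex) \<Rightarrow> 'i set \<Rightarrow> bool" where
  "riesz_seq g I \<longleftrightarrow> (\<forall>k\<in>I. g k \<in> L2) \<and> (\<exists>A B. A > 0 \<and> B > 0 \<and>
     (\<forall>F c. finite F \<and> F \<subseteq> I \<longrightarrow>
        A * (\<Sum>k\<in>F. (cmod (c k))\<^sup>2) \<le> (l2norm (\<lambda>x. \<Sum>k\<in>F. c k * g k x))\<^sup>2 \<and>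
        (l2norm (\<lambda>x. \<Sum>k\<in>F. c k * g k x))\<^sup>2 \<le> B * (\<Sum>k\<in>F. (cmod (c k))\<^sup>2)))"

end

theory Submission
  imports Defs
begin

definition ibox :: "nat \<Rightarrow> (int^'n) set" where "ibox N = {k. \<forall>i. \<bar>k$i\<bar> \<le> int N}"
definition kd :: "int^'n \<Rightarrow> real^'n \<Rightarrow> real" where "kd k x = (\<Sum>i\<in>UNIV. real_of_int (k$i) * x$i)"
definition ee :: "real \<Rightarrow> complex" where "ee x = cis (2*pi*x)"
definition gp :: "nat \<Rightarrow> nat^'n \<Rightarrow> real^'n" where "gp L t = (\<chi> i. real (t$i) / real L)"
definition TT :: "nat \<Rightarrow> (nat^'n) set" where "TT L = {t. \<forall>i. t$i < L}"

lemma vecset_eq: "{k::'b^'n. \<forall>i. k$i \<in> S i} = vec_lambda ` (PiE UNIV S)"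
proof (intro set_eqI iffI)
  fix k :: "'b^'n" assume "k \<in> {k. \<forall>i. k$i \<in> S i}"
  then have "vec_nth k \<in> PiE UNIV S" by auto
  moreover have "k = vec_lambda (vec_nth k)" by simp
  ultimately show "k \<in> vec_lambda ` (PiE UNIV S)" by blast
qed auto

lemma inj_vec_lambda: "inj_on (vec_lambda :: ('n::finite \<Rightarrow> 'b) \<Rightarrow> 'b^'n) A"
  by (rule inj_onI) (metis vec_lambda_inverse UNIV_I)

lemma finite_vecset: "(\<And>i. finite (S i)) \<Longrightarrow> finite {k::'b^'n. \<forall>i. k$i \<in> S i}"
  unfolding vecset_eq by (intro finite_imageI finite_PiE) auto

lemma card_vecset: "(\<And>i. finite (S i)) \<Longrightarrow> card {k::'b^'n. \<forall>i. k$i \<in> S i} = (\<Prod>i\<in>UNIV. card (S i))"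
  unfolding vecset_eq by (subst card_image[OF inj_vec_lambda]) (simp add: card_PiE)

lemma sum_vecset_prod:
  fixes h :: "'n::finite \<Rightarrow> 'b \<Rightarrow> 'c::comm_semiring_1"
  assumes "\<And>i. finite (S i)"
  shows "(\<Sum>k\<in>{k::'b^'n. \<forall>i. k$i \<in> S i}. \<Prod>i\<in>UNIV. h i (k$i)) = (\<Prod>i\<in>UNIV. \<Sum>y\<in>S i. h i y)"
  unfolding vecset_eq
  by (subst sum.reindex[OF inj_vec_lambda]) (simp add: prod_sum_PiE assms)

lemma ee_add: "ee (x + y) = ee x * ee y" by (simp add: ee_def cis_mult distrib_left)
lemma ee_minus: "ee (- x) = cnj (ee x)" by (simp add: ee_def cis_cnj)
lemma ee_diff: "ee (x - y) = ee x * cnj (ee y)" by (simp add: ee_def cis_cnj cis_mult right_diff_distrib)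
lemma norm_ee[simp]: "norm (ee x) = 1" by (simp add: ee_def)
lemma ee_zero[simp]: "ee 0 = 1" by (simp add: ee_def)
lemma ee_cnj_mult: "ee x * cnj (ee x) = 1"
  by (metis ee_diff ee_zero diff_self)
lemma ee_sum: "finite I \<Longrightarrow> ee (\<Sum>i\<in>I. f i) = (\<Prod>i\<in>I. ee (f i))"
  by (induction I rule: finite_induct) (simp_all add: ee_add)

lemma geo1:
  fixes m :: int and L :: nat
  assumes L: "0 < L" and m: "\<bar>m\<bar> < int L"
  shows "(\<Sum>s<L. ee (real_of_int m * real s / real L)) = (if m = 0 then of_nat L else 0)"
proof (cases "m = 0")
  case True then show ?thesis by simp
next
  case False
  define z where "z = ee (real_of_int m / real L)"
  have zs: "ee (real_of_int m * real s / real L) = z ^ s" for s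
  proof -
    have "z ^ s = cis (real s * (2*pi*(real_of_int m / real L)))" unfolding z_def ee_def by (rule Complex.DeMoivre)
    also have "\<dots> = ee (real_of_int m * real s / real L)" unfolding ee_def by (rule arg_cong[where f=cis]) simp
    finally show ?thesis by simp
  qed
  have z1: "z \<noteq> 1"
  proof
    assume "z = 1"
    then have "cos (2*pi*(real_of_int m / real L)) = 1"
      unfolding z_def ee_def by (metis cis.sel(1) one_complex.sel(1))
    then obtain n :: int where n: "2*pi*(real_of_int m / real L) = real_of_int n * 2 * pi"
      using cos_one_2pi_int by blast
    then have "real_of_int m = real_of_int n * real L" using L by (simp add: field_simps)
    then have "m = n * int L" by (metis of_int_eq_iff of_int_mult of_int_of_nat_eq)
    with False m show False
      by (metis abs_mult abs_of_nat less_le_not_le mult_le_cancel_right1 of_nat_0_le_iff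
          abs_ge_zero mult_eq_0_iff not_one_le_zero zero_less_abs_iff linorder_not_le int_one_le_iff_zero_less)
  qed
  have zL: "z ^ L = 1"
  proof -
    have "z ^ L = cis (real L * (2*pi*(real_of_int m / real L)))" unfolding z_def ee_def by (rule Complex.DeMoivre)
    also have "real L * (2*pi*(real_of_int m / real L)) = 2 * pi * real_of_int m" using L by simp
    finally show ?thesis by simp
  qed
  show ?thesis using False zs z1 zL by (simp add: geometric_sum)
qed

lemma TT_eq: "TT L = {t::nat^'n. \<forall>i. t$i \<in> {..<L}}" by (simp add: TT_def)

lemma finite_TT: "finite (TT L)" unfolding TT_eq by (rule finite_vecset) auto
lemma card_TT: "card (TT L :: (nat^'n) set) = L ^ CARD('n)"
  unfolding TT_eq by (subst card_vecset) auto

lemma kd_gp: "kd m (gp L t) = (\<Sum>i\<in>UNIV. real_of_int (m$i) * real (t$i) / real L)"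
  by (simp add: kd_def gp_def)

lemma orth:
  fixes m :: "int^'n" and L :: nat
  assumes L: "0 < L" and m: "\<And>i. \<bar>m$i\<bar> < int L"
  shows "(\<Sum>t\<in>TT L. ee (kd m (gp L t))) = (if m = 0 then of_nat L ^ CARD('n) else 0)"
proof -
  have "(\<Sum>t\<in>TT L. ee (kd m (gp L t))) = (\<Sum>t\<in>TT L. \<Prod>i\<in>UNIV. ee (real_of_int (m$i) * real (t$i) / real L))"
    by (simp add: kd_gp ee_sum)
  also have "\<dots> = (\<Prod>i\<in>UNIV. \<Sum>s<L. ee (real_of_int (m$i) * real s / real L))"
    unfolding TT_eq by (rule sum_vecset_prod) auto
  also have "\<dots> = (\<Prod>i\<in>UNIV. if m$i = 0 then of_nat L else 0)"
    by (simp add: geo1[OF L m])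
  also have "\<dots> = (if m = 0 then of_nat L ^ CARD('n) else 0)"
  proof (cases "m = 0")
    case True then show ?thesis by simp
  next
    case False
    then obtain i where "m$i \<noteq> 0" by (metis vec_eq_iff zero_index)
    then show ?thesis using False by (subst prod_zero) auto
  qed
  finally show ?thesis .
qed

definition fh :: "(int^'n) set \<Rightarrow> (int^'n \<Rightarrow> complex) \<Rightarrow> real^'n \<Rightarrow> complex" where
  "fh F c x = (\<Sum>j\<in>F. c j * ee (- kd j x))"
definition sy :: "(int^'n) set \<Rightarrow> (int^'n \<Rightarrow> complex) \<Rightarrow> real^'n \<Rightarrow> complex" where
  "sy M a x = (\<Sum>m\<in>M. a m * ee (kd m x))"
definition Q1 :: "(int^'n) set \<Rightarrow> (int^'n \<Rightarrow> complex) \<Rightarrow> (int^'n \<Rightarrow> complex) \<Rightarrow> complex" where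
  "Q1 F c a = (\<Sum>j\<in>F. \<Sum>k\<in>F. c j * cnj (c k) * a (j - k))"

lemma kd_add: "kd (m + k) x = kd m x + kd k x" by (simp add: kd_def algebra_simps sum.distrib)
lemma kd_diff: "kd (m - k) x = kd m x - kd k x" by (simp add: kd_def algebra_simps sum_subtractf)
lemma kd_zero[simp]: "kd 0 x = 0" by (simp add: kd_def)

lemma finite_ibox[simp]: "finite (ibox N :: (int^'n) set)"
proof -
  have "ibox N = {k::int^'n. \<forall>i. k$i \<in> {- int N..int N}}" by (auto simp: ibox_def abs_le_iff) (metis minus_le_iff)+
  then show ?thesis by (simp only:) (rule finite_vecset, simp)
qed

lemma P2:
  fixes F :: "(int^'n) set" and c a :: "int^'n \<Rightarrow> complex"
  assumes F: "F \<subseteq> ibox N" and supp: "\<And>m. m \<notin> ibox R \<Longrightarrow> a m = 0" and L: "2*N + R < L"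
  shows "(\<Sum>t\<in>TT L. sy (ibox R) a (gp L t) * (fh F c (gp L t) * cnj (fh F c (gp L t))))
        = of_nat L ^ CARD('n) * Q1 F c a"
proof -
  have fF: "finite F" using F finite_subset finite_ibox by blast
  define X where "X m j k = a m * c j * cnj (c k)" for m j k
  have pt: "sy (ibox R) a x * (fh F c x * cnj (fh F c x)) =
     (\<Sum>m\<in>ibox R. \<Sum>j\<in>F. \<Sum>k\<in>F. X m j k * ee (kd (m - j + k) x))" for x
  proof -
    have h1: "fh F c x * cnj (fh F c x) = (\<Sum>j\<in>F. \<Sum>k\<in>F. c j * cnj (c k) * ee (- kd j x + kd k x))"
      unfolding fh_def cnj_sum sum_product
      by (intro sum.cong refl) (simp add: ee_add ee_minus ee_diff mult_ac)
    show ?thesis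
      unfolding sy_def h1
      apply (subst sum_distrib_right)
      apply (intro sum.cong refl)
      apply (subst sum_distrib_left, intro sum.cong refl)
      apply (subst sum_distrib_left, intro sum.cong refl)
      by (simp add: X_def kd_add kd_diff ee_add ee_diff mult_ac)
  qed
  have "(\<Sum>t\<in>TT L. sy (ibox R) a (gp L t) * (fh F c (gp L t) * cnj (fh F c (gp L t))))
      = (\<Sum>m\<in>ibox R. \<Sum>j\<in>F. \<Sum>k\<in>F. X m j k * (\<Sum>t\<in>TT L. ee (kd (m - j + k) (gp L t))))"
    unfolding pt sum_distrib_left
    by (subst sum.swap, rule sum.cong[OF refl], subst sum.swap, rule sum.cong[OF refl], subst sum.swap, rule refl)
  also have "\<dots> = (\<Sum>m\<in>ibox R. \<Sum>j\<in>F. \<Sum>k\<in>F. X m j k * (if m = j - k then of_nat L ^ CARD('n) else 0))"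
  proof (intro sum.cong refl)
    fix m j k :: "int^'n" assume m: "m \<in> ibox R" and j: "j \<in> F" and k: "k \<in> F"
    have "\<bar>(m - j + k)$i\<bar> < int L" for i
    proof -
      have "\<bar>m$i\<bar> \<le> int R" "\<bar>j$i\<bar> \<le> int N" "\<bar>k$i\<bar> \<le> int N"
        using m j k F by (auto simp: ibox_def)
      then show ?thesis using L by simp
    qed
    then have "(\<Sum>t\<in>TT L. ee (kd (m - j + k) (gp L t))) = (if m - j + k = 0 then of_nat L ^ CARD('n) else 0)"
      using L by (intro orth) auto
    also have "(m - j + k = 0) = (m = j - k)" by (auto simp: algebra_simps)
    finally show "X m j k * (\<Sum>t\<in>TT L. ee (kd (m - j + k) (gp L t))) =
        X m j k * (if m = j - k then of_nat L ^ CARD('n) else 0)" by simp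
  qed
  also have "\<dots> = (\<Sum>j\<in>F. \<Sum>k\<in>F. \<Sum>m\<in>ibox R. X m j k * (if m = j - k then of_nat L ^ CARD('n) else 0))"
    by (subst sum.swap, rule sum.cong[OF refl], subst sum.swap, rule refl)
  also have "\<dots> = (\<Sum>j\<in>F. \<Sum>k\<in>F. of_nat L ^ CARD('n) * (c j * cnj (c k) * a (j - k)))"
  proof (intro sum.cong refl)
    fix j k
    have "(\<Sum>m\<in>ibox R. X m j k * (if m = j - k then of_nat L ^ CARD('n) else 0))
        = (\<Sum>m\<in>ibox R. if m = j - k then X m j k * of_nat L ^ CARD('n) else 0)"
      by (intro sum.cong refl) auto
    also have "\<dots> = (if j - k \<in> ibox R then X (j - k) j k * of_nat L ^ CARD('n) else 0)"
      using sum.delta[OF finite_ibox, of "j - k" "\<lambda>m. X m j k * of_nat L ^ CARD('n)" R] by simp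
    also have "\<dots> = of_nat L ^ CARD('n) * (c j * cnj (c k) * a (j - k))"
      using supp[of "j - k"] by (auto simp: X_def mult_ac)
    finally show "(\<Sum>m\<in>ibox R. X m j k * (if m = j - k then of_nat L ^ CARD('n) else 0)) =
        of_nat L ^ CARD('n) * (c j * cnj (c k) * a (j - k))" .
  qed
  also have "\<dots> = of_nat L ^ CARD('n) * Q1 F c a"
    by (simp add: Q1_def sum_distrib_left)
  finally show ?thesis .
qed

definition Gc :: "(int^'n) set \<Rightarrow> (int^'n \<Rightarrow> complex) \<Rightarrow> (int^'n \<Rightarrow> complex) \<Rightarrow> int^'n \<Rightarrow> complex" where
  "Gc F c a k = (\<Sum>j\<in>F. c j * a (j - k))"

lemma ibox_mono: "N \<le> N' \<Longrightarrow> ibox N \<subseteq> ibox N'"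
  by (auto simp: ibox_def) (meson dual_order.trans of_nat_le_iff)

lemma ibox_add: "j \<in> ibox N \<Longrightarrow> m \<in> ibox R \<Longrightarrow> j + m \<in> ibox (N + R)"
  by (auto simp: ibox_def abs_le_iff) (smt (verit))+

lemma ibox_diff: "j \<in> ibox N \<Longrightarrow> m \<in> ibox R \<Longrightarrow> j - m \<in> ibox (N + R)"
  by (auto simp: ibox_def abs_le_iff) (smt (verit))+

lemma ibox_uminus: "m \<in> ibox R \<Longrightarrow> - m \<in> ibox R"
  by (auto simp: ibox_def)

lemma zero_in_ibox[simp]: "0 \<in> ibox N" by (simp add: ibox_def)

lemma Gc_supp:
  assumes F: "F \<subseteq> ibox N" and supp: "\<And>m. m \<notin> ibox R \<Longrightarrow> a m = 0" and k: "k \<notin> ibox (N + R)"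
  shows "Gc F c a k = 0"
  unfolding Gc_def
proof (intro sum.neutral ballI)
  fix j assume "j \<in> F"
  then have "j - k \<notin> ibox R"
    using F k ibox_diff[of j N "j - k" R] by auto
  then show "c j * a (j - k) = 0" using supp by simp
qed

lemma fh_ext:
  assumes "F \<subseteq> F'" "finite F'" "\<And>k. k \<in> F' - F \<Longrightarrow> c k = 0"
  shows "fh F' c x = fh F c x"
  unfolding fh_def using assms by (intro sum.mono_neutral_right) auto

lemma Gc_ext:
  assumes "F \<subseteq> F'" "finite F'" "\<And>k. k \<in> F' - F \<Longrightarrow> c k = 0"
  shows "Gc F' c a k = Gc F c a k"
  unfolding Gc_def using assms by (intro sum.mono_neutral_right) auto

lemma reindex_diff:
  fixes g :: "int^'n \<Rightarrow> complex"
  assumes j: "j \<in> ibox N" and supp: "\<And>m. m \<notin> ibox R \<Longrightarrow> g (j - m) = 0"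
  shows "(\<Sum>k\<in>ibox (N + R). g k) = (\<Sum>m\<in>ibox R. g (j - m))"
proof -
  have inj: "inj_on (\<lambda>m. j - m) (ibox R)" by (rule inj_onI) simp
  have sub: "(\<lambda>m. j - m) ` ibox R \<subseteq> ibox (N + R)" using ibox_diff[OF j] by auto
  have "(\<Sum>k\<in>ibox (N + R). g k) = (\<Sum>k\<in>(\<lambda>m. j - m) ` ibox R. g k)"
  proof (rule sum.mono_neutral_right[OF finite_ibox sub])
    show "\<forall>i\<in>ibox (N + R) - (\<lambda>m. j - m) ` ibox R. g i = 0"
    proof
      fix k assume "k \<in> ibox (N + R) - (\<lambda>m. j - m) ` ibox R"
      then have kk: "k \<notin> (\<lambda>m. j - m) ` ibox R" by blast
      have "j - k \<notin> ibox R"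
      proof
        assume "j - k \<in> ibox R"
        then have "k \<in> (\<lambda>m. j - m) ` ibox R" by (rule image_eqI[rotated]) simp
        with kk show False by blast
      qed
      then show "g k = 0" using supp[of "j - k"] by simp
    qed
  qed
  also have "\<dots> = (\<Sum>m\<in>ibox R. g (j - m))" by (rule sum.reindex[OF inj, unfolded comp_def])
  finally show ?thesis .
qed

lemma T_lemma:
  assumes F: "F \<subseteq> ibox N" and supp: "\<And>m. m \<notin> ibox R \<Longrightarrow> a m = 0"
  shows "fh (ibox (N + R)) (Gc F c a) x = fh F c x * sy (ibox R) a x"
proof -
  have "fh (ibox (N + R)) (Gc F c a) x = (\<Sum>j\<in>F. c j * (\<Sum>k\<in>ibox (N + R). a (j - k) * ee (- kd k x)))"
    unfolding fh_def Gc_def sum_distrib_right sum_distrib_left mult.assoc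
    by (rule sum.swap)
  also have "\<dots> = (\<Sum>j\<in>F. c j * (\<Sum>m\<in>ibox R. a m * ee (- kd (j - m) x)))"
  proof (rule sum.cong[OF refl])
    fix j assume "j \<in> F"
    then have j: "j \<in> ibox N" using F by auto
    have "(\<Sum>k\<in>ibox (N + R). a (j - k) * ee (- kd k x)) = (\<Sum>m\<in>ibox R. a (j - (j - m)) * ee (- kd (j - m) x))"
      by (rule reindex_diff[OF j]) (simp add: supp)
    then show "c j * (\<Sum>k\<in>ibox (N + R). a (j - k) * ee (- kd k x)) = c j * (\<Sum>m\<in>ibox R. a m * ee (- kd (j - m) x))"
      by simp
  qed
  also have "\<dots> = (\<Sum>j\<in>F. \<Sum>m\<in>ibox R. c j * ee (- kd j x) * (a m * ee (kd m x)))"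
  proof (rule sum.cong[OF refl])
    fix j
    have "ee (- kd (j - m) x) = ee (- kd j x) * ee (kd m x)" for m
      by (simp add: kd_diff ee_add[symmetric])
    then show "c j * (\<Sum>m\<in>ibox R. a m * ee (- kd (j - m) x)) = (\<Sum>m\<in>ibox R. c j * ee (- kd j x) * (a m * ee (kd m x)))"
      by (simp add: sum_distrib_left mult_ac)
  qed
  also have "\<dots> = fh F c x * sy (ibox R) a x"
    unfolding fh_def sy_def by (rule sum_product[symmetric])
  finally show ?thesis .
qed

lemma sy_real:
  assumes herm: "\<And>m. a (- m) = cnj (a m)"
  shows "cnj (sy (ibox R) a x) = sy (ibox R) a x"
proof -
  have inj: "inj_on uminus (ibox R :: (int^'n) set)" by (rule inj_onI) simp
  have im: "uminus ` ibox R = (ibox R :: (int^'n) set)"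
    using ibox_uminus by (auto intro: image_eqI[where x="- _"])
  have "cnj (sy (ibox R) a x) = (\<Sum>m\<in>ibox R. a (- m) * ee (kd (- m) x))"
    unfolding sy_def cnj_sum
    by (intro sum.cong refl) (simp add: herm kd_diff[of 0 _ x, simplified] ee_minus)
  also have "\<dots> = (\<Sum>m\<in>uminus ` ibox R. a m * ee (kd m x))"
    by (rule sum.reindex[OF inj, unfolded comp_def, symmetric])
  also have "\<dots> = sy (ibox R) a x" unfolding im sy_def ..
  finally show ?thesis .
qed

lemma real_of_cnj_eq: "cnj z = z \<Longrightarrow> z = complex_of_real (Re z)"
  by (simp add: complex_eq_iff)

lemma Parseval:
  fixes F :: "(int^'n) set" and c :: "int^'n \<Rightarrow> complex"
  assumes F: "F \<subseteq> ibox N" and L: "2*N < L"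
  shows "(\<Sum>t\<in>TT L. fh F c (gp L t) * cnj (fh F c (gp L t))) = of_nat L ^ CARD('n) * (\<Sum>j\<in>F. c j * cnj (c j))"
proof -
  define d :: "int^'n \<Rightarrow> complex" where "d m = (if m = 0 then 1 else 0)" for m
  have sy1: "sy (ibox 0) d x = 1" for x
  proof -
    have "sy (ibox 0) d x = (\<Sum>m\<in>ibox 0. if m = 0 then ee (kd m x) else 0)"
      unfolding sy_def d_def by (intro sum.cong) auto
    then show ?thesis by simp
  qed
  have fF: "finite F" using finite_subset[OF F finite_ibox] .
  have q: "Q1 F c d = (\<Sum>j\<in>F. c j * cnj (c j))"
    unfolding Q1_def d_def
    by (intro sum.cong refl) (simp add: if_distrib fF cong: if_cong)
  have supp: "\<And>m. m \<notin> ibox 0 \<Longrightarrow> d m = 0" by (auto simp: d_def)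
  have L': "2*N + 0 < L" using L by simp
  have "(\<Sum>t\<in>TT L. sy (ibox 0) d (gp L t) * (fh F c (gp L t) * cnj (fh F c (gp L t)))) = of_nat L ^ CARD('n) * Q1 F c d"
    by (rule P2[OF F supp L'])
  then show ?thesis by (simp only: sy1 q mult_1)
qed

lemma card_ibox: "card (ibox N :: (int^'n) set) = (2*N+1) ^ CARD('n)"
proof -
  have "ibox N = {k::int^'n. \<forall>i. k$i \<in> {- int N..int N}}"
    by (auto simp: ibox_def abs_le_iff) (metis minus_le_iff)+
  then have "card (ibox N :: (int^'n) set) = (\<Prod>i\<in>(UNIV::'n set). card {- int N..int N})"
    by (simp only:) (rule card_vecset, simp)
  also have "\<dots> = (2*N+1) ^ CARD('n)" by (simp add: nat_add_distrib nat_mult_distrib)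
  finally show ?thesis .
qed

lemma reindex_add:
  fixes g :: "int^'n \<Rightarrow> complex"
  assumes k: "k \<in> ibox N" and supp: "\<And>m. m \<notin> ibox R \<Longrightarrow> g (k + m) = 0"
  shows "(\<Sum>j\<in>ibox (N + R). g j) = (\<Sum>m\<in>ibox R. g (k + m))"
proof -
  have s2: "g (k - m) = 0" if "m \<notin> ibox R" for m
  proof -
    have "- m \<notin> ibox R" using that ibox_uminus by fastforce
    then show ?thesis using supp[of "- m"] by simp
  qed
  have "(\<Sum>j\<in>ibox (N + R). g j) = (\<Sum>m\<in>ibox R. g (k - m))"
    by (rule reindex_diff[OF k]) (rule s2)
  also have "\<dots> = (\<Sum>m\<in>uminus ` ibox R. g (k + m))"
    by (subst sum.reindex) (auto intro: inj_onI)
  also have "uminus ` ibox R = (ibox R :: (int^'n) set)"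
    using ibox_uminus by (auto intro: image_eqI[where x="- _"])
  finally show ?thesis .
qed

lemma Q1_Gc: "Q1 F c a = (\<Sum>k\<in>F. cnj (c k) * Gc F c a k)"
  unfolding Q1_def Gc_def sum_distrib_left
  by (subst sum.swap) (simp add: mult_ac)

lemma sum_cmod_shift:
  assumes fF: "finite F" and supp: "\<And>m. m \<notin> ibox R \<Longrightarrow> a m = 0"
  shows "(\<Sum>j\<in>F. cmod (a (j - k))) \<le> (\<Sum>m\<in>ibox R. cmod (a m))"
proof -
  have inj: "inj_on (\<lambda>j. j - k) F" by (rule inj_onI) simp
  have "(\<Sum>j\<in>F. cmod (a (j - k))) = (\<Sum>m\<in>(\<lambda>j. j - k) ` F. cmod (a m))"
    by (simp add: sum.reindex[OF inj])
  also have "\<dots> \<le> (\<Sum>m\<in>(\<lambda>j. j - k) ` F \<union> ibox R. cmod (a m))"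
    by (rule sum_mono2) (use fF in auto)
  also have "\<dots> = (\<Sum>m\<in>ibox R. cmod (a m))"
    by (rule sum.mono_neutral_right) (use fF supp in auto)
  finally show ?thesis .
qed

lemma Gc_bound:
  assumes fF: "finite F" and supp: "\<And>m. m \<notin> ibox R \<Longrightarrow> a m = 0" and c: "\<And>j. cmod (c j) \<le> 1"
  shows "cmod (Gc F c a k) \<le> (\<Sum>m\<in>ibox R. cmod (a m))"
proof -
  have "cmod (Gc F c a k) \<le> (\<Sum>j\<in>F. cmod (c j * a (j - k)))"
    unfolding Gc_def by (rule norm_sum)
  also have "\<dots> \<le> (\<Sum>j\<in>F. cmod (a (j - k)))"
    by (rule sum_mono) (simp add: norm_mult mult_left_le_one_le c)
  also have "\<dots> \<le> (\<Sum>m\<in>ibox R. cmod (a m))" by (rule sum_cmod_shift[OF fF supp])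
  finally show ?thesis .
qed

lemma Gc_char:
  assumes supp: "\<And>m. m \<notin> ibox R \<Longrightarrow> a m = 0" and k: "k \<in> ibox N"
  shows "Gc (ibox (N + R)) (\<lambda>j. ee (kd j x)) a k = ee (kd k x) * sy (ibox R) a x"
proof -
  have "Gc (ibox (N + R)) (\<lambda>j. ee (kd j x)) a k = (\<Sum>m\<in>ibox R. ee (kd (k + m) x) * a (k + m - k))"
    unfolding Gc_def by (rule reindex_add[OF k]) (simp add: supp)
  also have "\<dots> = ee (kd k x) * sy (ibox R) a x"
    unfolding sy_def sum_distrib_left by (intro sum.cong refl) (simp add: kd_add ee_add mult_ac)
  finally show ?thesis .
qed

lemma box_key:
  fixes a :: "int^'n \<Rightarrow> complex"
  assumes supp: "\<And>m. m \<notin> ibox R \<Longrightarrow> a m = 0" and herm: "\<And>m. a (-m) = cnj (a m)"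
    and H: "\<And>N c. A * Re (Q1 (ibox N) c a) \<le> (\<Sum>k\<in>ibox (N+R). (cmod (Gc (ibox N) c a k))\<^sup>2)"
    and A: "A \<ge> 0"
  shows "real (card (ibox n :: (int^'n) set)) * (A * Re (sy (ibox R) a x) - (Re (sy (ibox R) a x))\<^sup>2)
     \<le> ((\<Sum>m\<in>ibox R. cmod (a m))\<^sup>2 + A * (\<Sum>m\<in>ibox R. cmod (a m))) *
        (real (card (ibox (n + 2*R) :: (int^'n) set)) - real (card (ibox n :: (int^'n) set)))"
proof -
  define p where "p = sy (ibox R) a x"
  define pr where "pr = Re p"
  have preal: "p = complex_of_real pr"
    unfolding pr_def p_def by (rule real_of_cnj_eq[OF sy_real[where a=a, OF herm]])
  define S0 where "S0 = (\<Sum>m\<in>ibox R. cmod (a m))"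
  have S0: "S0 \<ge> 0" by (simp add: S0_def sum_nonneg)
  define N where "N = n + R"
  define c where "c = (\<lambda>j::int^'n. ee (kd j x))"
  define I where "I = (ibox n :: (int^'n) set)"
  have IN: "I \<subseteq> ibox N" unfolding I_def N_def by (rule ibox_mono) simp
  have NB: "ibox N \<subseteq> ibox (N + R)" by (rule ibox_mono) simp
  have IB: "I \<subseteq> ibox (N+R)" using IN NB by auto
  have NR: "N + R = n + 2*R" by (simp add: N_def)
  have cb: "cmod (c j) \<le> 1" for j by (simp add: c_def)
  have Gin: "Gc (ibox N) c a k = ee (kd k x) * p" if "k \<in> I" for k
    using Gc_char[OF supp, where k=k and N=n and x=x] that by (simp add: I_def N_def c_def p_def)
  have Gb: "cmod (Gc (ibox N) c a k) \<le> S0" for k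
    unfolding S0_def by (rule Gc_bound[OF finite_ibox supp cb])
  define E where "E = (\<Sum>k\<in>ibox N - I. cnj (c k) * Gc (ibox N) c a k)"
  have "Q1 (ibox N) c a = E + (\<Sum>k\<in>I. cnj (c k) * Gc (ibox N) c a k)"
    unfolding Q1_Gc E_def by (rule sum.subset_diff[OF IN finite_ibox])
  also have "(\<Sum>k\<in>I. cnj (c k) * Gc (ibox N) c a k) = (\<Sum>k\<in>I. p)"
  proof (rule sum.cong[OF refl])
    fix k assume k: "k \<in> I"
    have "cnj (c k) * Gc (ibox N) c a k = (ee (kd k x) * cnj (ee (kd k x))) * p"
      using Gin[OF k] by (simp add: c_def mult_ac)
    then show "cnj (c k) * Gc (ibox N) c a k = p" by (simp add: ee_cnj_mult)
  qed
  finally have Qeq: "Q1 (ibox N) c a = E + of_nat (card I) * p" by simp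
  have Eb: "cmod E \<le> real (card (ibox N - I)) * S0"
  proof -
    have "cmod E \<le> (\<Sum>k\<in>ibox N - I. cmod (cnj (c k) * Gc (ibox N) c a k))"
      unfolding E_def by (rule norm_sum)
    also have "\<dots> \<le> (\<Sum>k\<in>ibox N - I. S0)"
      by (rule sum_mono) (use Gb in \<open>simp add: norm_mult c_def\<close>)
    finally show ?thesis by simp
  qed
  have ReQ: "Re (Q1 (ibox N) c a) \<ge> real (card I) * pr - real (card (ibox N - I)) * S0"
  proof -
    have "Re E \<ge> - cmod E" using abs_Re_le_cmod[of E] by linarith
    then show ?thesis using Eb by (simp add: Qeq preal)
  qed
  define Q2 where "Q2 = (\<Sum>k\<in>ibox (N+R). (cmod (Gc (ibox N) c a k))\<^sup>2)"
  have "Q2 = (\<Sum>k\<in>ibox (N+R) - I. (cmod (Gc (ibox N) c a k))\<^sup>2) + (\<Sum>k\<in>I. (cmod (Gc (ibox N) c a k))\<^sup>2)"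
    unfolding Q2_def by (rule sum.subset_diff[OF IB finite_ibox])
  also have "(\<Sum>k\<in>I. (cmod (Gc (ibox N) c a k))\<^sup>2) = (\<Sum>k\<in>I. pr\<^sup>2)"
    by (rule sum.cong[OF refl]) (simp add: Gin norm_mult preal)
  also have "(\<Sum>k\<in>ibox (N+R) - I. (cmod (Gc (ibox N) c a k))\<^sup>2) \<le> (\<Sum>k\<in>ibox (N+R) - I. S0\<^sup>2)"
    by (rule sum_mono) (simp add: Gb power_mono)
  finally have Q2b: "Q2 \<le> real (card (ibox (N+R) - I)) * S0\<^sup>2 + real (card I) * pr\<^sup>2" by simp
  have D12: "card (ibox N - I) \<le> card (ibox (N+R) - I)"
    by (rule card_mono) (use NB in auto)
  have "A * (real (card I) * pr - real (card (ibox N - I)) * S0) \<le> A * Re (Q1 (ibox N) c a)"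
    using ReQ A by (simp add: mult_left_mono)
  also have "\<dots> \<le> Q2" unfolding Q2_def by (rule H)
  finally have main: "A * (real (card I) * pr - real (card (ibox N - I)) * S0)
     \<le> real (card (ibox (N+R) - I)) * S0\<^sup>2 + real (card I) * pr\<^sup>2" using Q2b by linarith
  have "A * real (card (ibox N - I)) * S0 \<le> A * real (card (ibox (N+R) - I)) * S0"
    using D12 A S0 by (intro mult_right_mono mult_left_mono) auto
  with main have "real (card I) * (A * pr - pr\<^sup>2) \<le> real (card (ibox (N+R) - I)) * (S0\<^sup>2 + A * S0)"
    by (simp add: algebra_simps)
  moreover have "real (card (ibox (N+R) - I)) = real (card (ibox (N+R) :: (int^'n) set)) - real (card I)"
    using card_Diff_subset[OF finite_subset[OF IB finite_ibox] IB] card_mono[OF finite_ibox IB]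
    by (simp add: of_nat_diff)
  ultimately show ?thesis unfolding NR by (simp add: I_def p_def pr_def S0_def mult.commute)
qed

lemma box_arg:
  fixes a :: "int^'n \<Rightarrow> complex"
  assumes supp: "\<And>m. m \<notin> ibox R \<Longrightarrow> a m = 0" and herm: "\<And>m. a (-m) = cnj (a m)"
    and H: "\<And>N c. A * Re (Q1 (ibox N) c a) \<le> (\<Sum>k\<in>ibox (N+R). (cmod (Gc (ibox N) c a k))\<^sup>2)"
    and A: "A \<ge> 0"
  shows "A * Re (sy (ibox R) a x) \<le> (Re (sy (ibox R) a x))\<^sup>2"
proof (rule ccontr)
  define pr where "pr = Re (sy (ibox R) a x)"
  define S0 where "S0 = (\<Sum>m\<in>ibox R. cmod (a m))"
  have S0: "S0 \<ge> 0" by (simp add: S0_def sum_nonneg)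
  define C where "C = S0\<^sup>2 + A * S0"
  have C0: "C \<ge> 0" using S0 A by (simp add: C_def)
  define d where "d = CARD('n)"
  define r where "r = A * pr - pr\<^sup>2"
  assume "\<not> A * Re (sy (ibox R) a x) \<le> (Re (sy (ibox R) a x))\<^sup>2"
  then have r: "0 < r" by (simp add: r_def pr_def)
  define g where "g n = C * ((1 + 4 * real R / real n) ^ d - 1)" for n
  have "(\<lambda>n. 4 * real R / real n) \<longlonglongrightarrow> 0" by (rule lim_const_over_n)
  then have "g \<longlonglongrightarrow> C * ((1 + 0) ^ d - 1)" unfolding g_def by (intro tendsto_intros)
  then have "g \<longlonglongrightarrow> 0" by simp
  from order_tendstoD(2)[OF this r] obtain n0 where n0: "\<And>n. n \<ge> n0 \<Longrightarrow> g n < r"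
    by (auto simp: eventually_sequentially)
  define n where "n = Suc n0"
  have gn: "g n < r" using n0 by (simp add: n_def)
  define u where "u = real (2*n+1)"
  define v where "v = real (2*(n + 2*R)+1)"
  have u0: "u > 0" by (simp add: u_def)
  have key: "u ^ d * r \<le> C * (v ^ d - u ^ d)"
    using box_key[OF supp herm H A, of n x] unfolding card_ibox
    by (simp add: u_def v_def d_def r_def pr_def C_def S0_def mult.commute)
  have vu: "v / u = 1 + 4 * real R / u" using u0 by (simp add: u_def v_def field_simps)
  have "4 * real R / u \<le> 4 * real R / real n"
    by (rule divide_left_mono) (auto simp: u_def n_def)
  then have vu2: "(v / u) ^ d \<le> (1 + 4 * real R / real n) ^ d"
    unfolding vu using u0 by (intro power_mono) auto
  have "v ^ d = u ^ d * (v / u) ^ d" using u0 by (simp add: power_divide)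
  then have "u ^ d * r \<le> u ^ d * (C * ((v / u) ^ d - 1))" using key by (simp add: algebra_simps)
  also have "\<dots> \<le> u ^ d * g n"
    unfolding g_def using vu2 C0 u0 by (intro mult_left_mono) auto
  finally have "r \<le> g n" using u0 by simp
  with gn show False by simp
qed

lemma exists_ibox: "finite F \<Longrightarrow> \<exists>N. F \<subseteq> (ibox N :: (int^'n) set)"
proof (induction F rule: finite_induct)
  case empty then show ?case by auto
next
  case (insert k F)
  then obtain N where N: "F \<subseteq> ibox N" by blast
  define M where "M = (\<Sum>i\<in>UNIV. nat \<bar>k$i\<bar>)"
  have "\<bar>k$i\<bar> \<le> int M" for i
  proof -
    have "nat \<bar>k$i\<bar> \<le> M" unfolding M_def by (rule member_le_sum) auto
    then show ?thesis by linarith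
  qed
  then have "k \<in> ibox M" by (simp add: ibox_def)
  then have "insert k F \<subseteq> ibox (max N M)"
    using N ibox_mono[of N "max N M"] ibox_mono[of M "max N M"] by auto
  then show ?case by blast
qed

lemma cont_vec_nth[continuous_intros]: "continuous_on S (\<lambda>x::real^'n. x $ i)"
  by (intro linear_continuous_on bounded_linear_vec_nth)

lemma cont_sy: "continuous_on UNIV (\<lambda>x. Re (sy (ibox R) a x))"
  unfolding sy_def ee_def cis_conv_exp kd_def
  by (intro continuous_intros)

lemma sum_nonneg_sq_fh:
  fixes F :: "(int^'n) set"
  assumes F: "F \<subseteq> ibox N" and supp: "\<And>m. m \<notin> ibox R \<Longrightarrow> a m = 0"
    and herm: "\<And>m. a (-m) = cnj (a m)" and L: "2*N + R < L"
  shows "(\<Sum>t\<in>TT L. Re (sy (ibox R) a (gp L t)) * (cmod (fh F c (gp L t)))\<^sup>2) = real L ^ CARD('n) * Re (Q1 F c a)"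
    and "(\<Sum>t\<in>TT L. (cmod (fh F c (gp L t)))\<^sup>2) = real L ^ CARD('n) * (\<Sum>k\<in>F. (cmod (c k))\<^sup>2)"
proof -
  have sr: "sy (ibox R) a x = complex_of_real (Re (sy (ibox R) a x))" for x
    by (rule real_of_cnj_eq[OF sy_real[where a=a, OF herm]])
  have "complex_of_real (\<Sum>t\<in>TT L. Re (sy (ibox R) a (gp L t)) * (cmod (fh F c (gp L t)))\<^sup>2)
      = (\<Sum>t\<in>TT L. sy (ibox R) a (gp L t) * (fh F c (gp L t) * cnj (fh F c (gp L t))))"
    by (simp add: complex_norm_square[symmetric] sr[symmetric])
  also have "\<dots> = of_nat L ^ CARD('n) * Q1 F c a" by (rule P2[OF F supp L])
  finally have eqc: "complex_of_real (\<Sum>t\<in>TT L. Re (sy (ibox R) a (gp L t)) * (cmod (fh F c (gp L t)))\<^sup>2)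
      = of_nat L ^ CARD('n) * Q1 F c a" .
  then show "(\<Sum>t\<in>TT L. Re (sy (ibox R) a (gp L t)) * (cmod (fh F c (gp L t)))\<^sup>2) = real L ^ CARD('n) * Re (Q1 F c a)"
  proof -
    have e2: "(of_nat L ^ CARD('n) :: complex) = complex_of_real (real L ^ CARD('n))" by simp
    show ?thesis using arg_cong[OF eqc, of Re] unfolding e2 by simp
  qed
  have L2: "2*N < L" using L by simp
  have "complex_of_real (\<Sum>t\<in>TT L. (cmod (fh F c (gp L t)))\<^sup>2)
      = (\<Sum>t\<in>TT L. fh F c (gp L t) * cnj (fh F c (gp L t)))"
    by (simp add: complex_norm_square[symmetric])
  also have "\<dots> = of_nat L ^ CARD('n) * (\<Sum>j\<in>F. c j * cnj (c j))" by (rule Parseval[OF F L2])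
  also have "\<dots> = complex_of_real (real L ^ CARD('n) * (\<Sum>k\<in>F. (cmod (c k))\<^sup>2))"
    by (simp add: complex_norm_square[symmetric])
  finally show "(\<Sum>t\<in>TT L. (cmod (fh F c (gp L t)))\<^sup>2) = real L ^ CARD('n) * (\<Sum>k\<in>F. (cmod (c k))\<^sup>2)"
    using of_real_eq_iff by blast
qed

lemma riesz_bounds:
  fixes F :: "(int^'n) set"
  assumes supp: "\<And>m. m \<notin> ibox R \<Longrightarrow> a m = 0"
    and herm: "\<And>m. a (-m) = cnj (a m)" and low: "\<And>x. A \<le> Re (sy (ibox R) a x)" and fF: "finite F"
  shows "A * (\<Sum>k\<in>F. (cmod (c k))\<^sup>2) \<le> Re (Q1 F c a)"
    and "Re (Q1 F c a) \<le> (\<Sum>m\<in>ibox R. cmod (a m)) * (\<Sum>k\<in>F. (cmod (c k))\<^sup>2)"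
proof -
  obtain N where F: "F \<subseteq> ibox N" using exists_ibox[OF fF] by blast
  define L where "L = 2*N + R + 1"
  have L: "2*N + R < L" by (simp add: L_def)
  have Lp: "real L ^ CARD('n) > 0" by (simp add: L_def)
  note e = sum_nonneg_sq_fh[where a=a and R=R and c=c, OF F supp herm L]
  have "real L ^ CARD('n) * (A * (\<Sum>k\<in>F. (cmod (c k))\<^sup>2)) = A * (real L ^ CARD('n) * (\<Sum>k\<in>F. (cmod (c k))\<^sup>2))"
    by (simp add: algebra_simps)
  also have "\<dots> = A * (\<Sum>t\<in>TT L. (cmod (fh F c (gp L t)))\<^sup>2)" using e(2) by simp
  also have "\<dots> = (\<Sum>t\<in>TT L. A * (cmod (fh F c (gp L t)))\<^sup>2)" by (simp add: sum_distrib_left)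
  also have "\<dots> \<le> (\<Sum>t\<in>TT L. Re (sy (ibox R) a (gp L t)) * (cmod (fh F c (gp L t)))\<^sup>2)"
    by (rule sum_mono) (simp add: low mult_right_mono)
  also have "\<dots> = real L ^ CARD('n) * Re (Q1 F c a)" by (rule e(1))
  finally show "A * (\<Sum>k\<in>F. (cmod (c k))\<^sup>2) \<le> Re (Q1 F c a)" using Lp by simp
  define S0 where "S0 = (\<Sum>m\<in>ibox R. cmod (a m))"
  have up: "Re (sy (ibox R) a x) \<le> S0" for x
  proof -
    have "Re (sy (ibox R) a x) \<le> cmod (sy (ibox R) a x)" by (rule complex_Re_le_cmod)
    also have "\<dots> \<le> (\<Sum>m\<in>ibox R. cmod (a m * ee (kd m x)))" unfolding sy_def by (rule norm_sum)
    also have "\<dots> = S0" by (simp add: S0_def norm_mult)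
    finally show ?thesis .
  qed
  have "real L ^ CARD('n) * Re (Q1 F c a) = (\<Sum>t\<in>TT L. Re (sy (ibox R) a (gp L t)) * (cmod (fh F c (gp L t)))\<^sup>2)"
    by (rule e(1)[symmetric])
  also have "\<dots> \<le> (\<Sum>t\<in>TT L. S0 * (cmod (fh F c (gp L t)))\<^sup>2)"
    by (rule sum_mono) (simp add: up mult_right_mono)
  also have "\<dots> = S0 * (\<Sum>t\<in>TT L. (cmod (fh F c (gp L t)))\<^sup>2)" by (simp add: sum_distrib_left)
  also have "\<dots> = S0 * (real L ^ CARD('n) * (\<Sum>k\<in>F. (cmod (c k))\<^sup>2))" using e(2) by simp
  also have "\<dots> = real L ^ CARD('n) * (S0 * (\<Sum>k\<in>F. (cmod (c k))\<^sup>2))" by (simp add: algebra_simps)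
  finally show "Re (Q1 F c a) \<le> (\<Sum>m\<in>ibox R. cmod (a m)) * (\<Sum>k\<in>F. (cmod (c k))\<^sup>2)"
    using Lp by (simp add: S0_def)
qed

lemma conn_arg:
  fixes p :: "real^'n \<Rightarrow> real"
  assumes cont: "continuous_on UNIV p" and h: "\<And>x. A * p x \<le> (p x)\<^sup>2" and A: "A > 0"
    and ex: "\<exists>x. p x > 0"
  shows "A \<le> p x"
proof (rule ccontr)
  assume nx: "\<not> A \<le> p x"
  have c1: "closed {x. p x \<le> 0}" by (rule closed_Collect_le[OF cont continuous_on_const])
  have c2: "closed {x. A \<le> p x}" by (rule closed_Collect_le[OF continuous_on_const cont])
  have cov: "UNIV \<subseteq> {x. p x \<le> 0} \<union> {x. A \<le> p x}"
  proof
    fix y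
    show "y \<in> {x. p x \<le> 0} \<union> {x. A \<le> p x}"
    proof (cases "p y \<le> 0")
      case False
      then have "A * p y \<le> p y * p y" using h[of y] by (simp add: power2_eq_square)
      then have "A \<le> p y" using False by simp
      then show ?thesis by simp
    qed simp
  qed
  have dis: "{x. p x \<le> 0} \<inter> {x. A \<le> p x} \<inter> UNIV = {}" using A by auto
  have n1: "{x. p x \<le> 0} \<inter> UNIV \<noteq> {}"
  proof -
    have "p x \<le> 0"
    proof (rule ccontr)
      assume "\<not> p x \<le> 0"
      then have "A * p x \<le> p x * p x" "p x > 0" using h[of x] by (auto simp: power2_eq_square)
      then show False using nx by simp
    qed
    then show ?thesis by auto
  qed
  have n2: "{x. A \<le> p x} \<inter> UNIV \<noteq> {}"
  proof -
    obtain y where "p y > 0" using ex by blast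
    then have "A * p y \<le> p y * p y" using h[of y] by (simp add: power2_eq_square)
    then have "A \<le> p y" using \<open>p y > 0\<close> by simp
    then show ?thesis by auto
  qed
  have "connected (UNIV :: (real^'n) set)" by (rule connected_UNIV)
  then show False unfolding connected_closed using c1 c2 cov dis n1 n2 by blast
qed

primrec neu :: "(int^'n \<Rightarrow> complex) \<Rightarrow> nat \<Rightarrow> real \<Rightarrow> nat \<Rightarrow> int^'n \<Rightarrow> nat \<Rightarrow> int^'n \<Rightarrow> complex" where
  "neu a R S N0 j0 0 = (\<lambda>k. if k = j0 then 1 else 0)"
| "neu a R S N0 j0 (Suc n) = (\<lambda>k. neu a R S N0 j0 n k - Gc (ibox (N0 + n*R)) (neu a R S N0 j0 n) a k / complex_of_real S)"

lemma neu_supp: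
  fixes a :: "int^'n \<Rightarrow> complex"
  assumes supp: "\<And>m. m \<notin> ibox R \<Longrightarrow> a m = 0" and j0: "j0 \<in> ibox N0"
  shows "k \<notin> ibox (N0 + n*R) \<Longrightarrow> neu a R S N0 j0 n k = 0"
proof (induction n arbitrary: k)
  case 0 then show ?case using j0 by auto
next
  case (Suc n)
  have sub: "ibox (N0 + n*R) \<subseteq> ibox (N0 + Suc n * R)" by (rule ibox_mono) simp
  have "neu a R S N0 j0 n k = 0" using Suc sub by blast
  moreover have "Gc (ibox (N0 + n*R)) (neu a R S N0 j0 n) a k = 0"
  proof (rule Gc_supp[OF order_refl supp])
    have eq: "N0 + n*R + R = N0 + Suc n * R" by simp
    show "k \<notin> ibox (N0 + n*R + R)" using Suc.prems unfolding eq .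
  qed
  ultimately show ?case by simp
qed

lemma fh_lin: "fh F (\<lambda>k. f k - g k / s) x = fh F f x - fh F g x / s"
  unfolding fh_def by (simp add: sum_subtractf sum_divide_distrib algebra_simps)

lemma neu_fh:
  fixes a :: "int^'n \<Rightarrow> complex"
  assumes supp: "\<And>m. m \<notin> ibox R \<Longrightarrow> a m = 0" and j0: "j0 \<in> ibox N0"
  shows "fh (ibox (N0 + n*R)) (neu a R S N0 j0 n) x = (1 - sy (ibox R) a x / complex_of_real S) ^ n * ee (- kd j0 x)"
proof (induction n)
  case 0
  have "fh (ibox N0) (neu a R S N0 j0 0) x = (\<Sum>j\<in>ibox N0. if j = j0 then ee (- kd j x) else 0)"
    unfolding fh_def by (intro sum.cong) auto
  then show ?case using j0 by simp
next
  case (Suc n)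
  define B :: "(int^'n) set" where "B = ibox (N0 + n*R)"
  have B': "ibox (N0 + Suc n * R) = ibox (N0 + n*R + R)" by (simp add: algebra_simps)
  have ext: "fh (ibox (N0 + n*R + R)) (neu a R S N0 j0 n) x = fh B (neu a R S N0 j0 n) x"
    unfolding B_def by (rule fh_ext) (use ibox_mono[of "N0 + n*R" "N0 + n*R + R"] neu_supp[OF supp j0] in auto)
  have T: "fh (ibox (N0 + n*R + R)) (Gc B (neu a R S N0 j0 n) a) x = fh B (neu a R S N0 j0 n) x * sy (ibox R) a x"
    unfolding B_def by (rule T_lemma[OF order_refl supp])
  show ?case
    unfolding B' neu.simps fh_lin B_def[symmetric] ext T Suc[folded B_def]
    by (simp add: algebra_simps)
qed

lemma neu_tele:
  fixes a :: "int^'n \<Rightarrow> complex"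
  assumes supp: "\<And>m. m \<notin> ibox R \<Longrightarrow> a m = 0" and j0: "j0 \<in> ibox N0" and S: "S \<noteq> 0"
  shows "Gc (ibox (N0 + M*R)) (\<lambda>k. (\<Sum>n<M. neu a R S N0 j0 n k) / complex_of_real S) a k
       = neu a R S N0 j0 0 k - neu a R S N0 j0 M k"
proof -
  define F :: "(int^'n) set" where "F = ibox (N0 + M*R)"
  have "Gc F (\<lambda>k. (\<Sum>n<M. neu a R S N0 j0 n k) / complex_of_real S) a k
      = (\<Sum>n<M. Gc F (neu a R S N0 j0 n) a k / complex_of_real S)"
    unfolding Gc_def sum_divide_distrib sum_distrib_right
    by (subst sum.swap) (simp add: algebra_simps)
  also have "\<dots> = (\<Sum>n<M. neu a R S N0 j0 n k - neu a R S N0 j0 (Suc n) k)"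
  proof (rule sum.cong[OF refl])
    fix n assume "n \<in> {..<M}"
    then have nM: "n \<le> M" by simp
    have sub: "ibox (N0 + n*R) \<subseteq> F" unfolding F_def by (rule ibox_mono) (simp add: nM mult_right_mono)
    have "Gc F (neu a R S N0 j0 n) a k = Gc (ibox (N0 + n*R)) (neu a R S N0 j0 n) a k"
      by (rule Gc_ext[OF sub]) (auto simp: F_def intro: neu_supp[OF supp j0])
    then show "Gc F (neu a R S N0 j0 n) a k / complex_of_real S = neu a R S N0 j0 n k - neu a R S N0 j0 (Suc n) k"
      by simp
  qed
  also have "\<dots> = neu a R S N0 j0 0 k - neu a R S N0 j0 M k" by (rule sum_lessThan_telescope')
  finally show ?thesis unfolding F_def .
qed

lemma neu_small:
  fixes a :: "int^'n \<Rightarrow> complex"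
  assumes supp: "\<And>m. m \<notin> ibox R \<Longrightarrow> a m = 0" and herm: "\<And>m. a (-m) = cnj (a m)"
    and j0: "j0 \<in> ibox N0"
    and low: "\<And>x. A \<le> Re (sy (ibox R) a x)" and up: "\<And>x. Re (sy (ibox R) a x) \<le> S" and A: "0 < A"
  shows "(\<Sum>k\<in>ibox (N0 + M*R). (cmod (neu a R S N0 j0 M k))\<^sup>2) \<le> (1 - A / S) ^ (2*M)"
proof -
  define N where "N = N0 + M*R"
  define L where "L = 2*N + R + 1"
  have L: "2*N + R < L" by (simp add: L_def)
  have Lp: "real L ^ CARD('n) > 0" by (simp add: L_def)
  have S: "S > 0" using low[of 0] up[of 0] A by linarith
  note e = sum_nonneg_sq_fh(2)[where a=a and R=R and c="neu a R S N0 j0 M", OF order_refl supp herm L]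
  have sr: "sy (ibox R) a x = complex_of_real (Re (sy (ibox R) a x))" for x
    by (rule real_of_cnj_eq[OF sy_real[where a=a, OF herm]])
  have pt: "(cmod (fh (ibox N) (neu a R S N0 j0 M) x))\<^sup>2 \<le> (1 - A / S) ^ (2*M)" for x
  proof -
    define pr where "pr = Re (sy (ibox R) a x)"
    have h: "1 - sy (ibox R) a x / complex_of_real S = complex_of_real (1 - pr / S)"
      by (subst sr) (simp add: pr_def)
    have "cmod (fh (ibox N) (neu a R S N0 j0 M) x) = cmod ((1 - sy (ibox R) a x / complex_of_real S) ^ M * ee (- kd j0 x))"
      using neu_fh[OF supp j0, where n=M and x=x and S=S] by (simp add: N_def)
    also have "\<dots> = \<bar>1 - pr / S\<bar> ^ M" by (simp only: h norm_mult norm_power norm_of_real norm_ee mult_1_right)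
    finally have "cmod (fh (ibox N) (neu a R S N0 j0 M) x) = \<bar>1 - pr / S\<bar> ^ M" .
    moreover have "\<bar>1 - pr / S\<bar> \<le> 1 - A / S"
      using low[of x] up[of x] S A by (auto simp: pr_def field_simps)
    ultimately have "cmod (fh (ibox N) (neu a R S N0 j0 M) x) \<le> (1 - A / S) ^ M"
      by (simp add: power_mono)
    then have "(cmod (fh (ibox N) (neu a R S N0 j0 M) x))\<^sup>2 \<le> ((1 - A / S) ^ M)\<^sup>2"
      by (simp add: power_mono)
    then show ?thesis by (simp add: power_mult[symmetric] mult.commute)
  qed
  have "real L ^ CARD('n) * (\<Sum>k\<in>ibox N. (cmod (neu a R S N0 j0 M k))\<^sup>2)
      = (\<Sum>t\<in>TT L. (cmod (fh (ibox N) (neu a R S N0 j0 M) (gp L t)))\<^sup>2)" using e by simp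
  also have "\<dots> \<le> (\<Sum>t\<in>(TT L :: (nat^'n) set). (1 - A / S) ^ (2*M))" by (rule sum_mono) (rule pt)
  also have "\<dots> = real L ^ CARD('n) * (1 - A / S) ^ (2*M)" by (simp add: card_TT)
  finally show ?thesis using Lp by (simp add: N_def)
qed

lemma borel_measurable_cnj[measurable]:
  assumes "g \<in> borel_measurable M" shows "(\<lambda>x. cnj (g x)) \<in> borel_measurable M"
proof -
  have "cnj \<in> borel_measurable borel"
    by (intro borel_measurable_continuous_onI linear_continuous_on bounded_linear_cnj)
  from measurable_compose[OF assms this] show ?thesis by (simp add: comp_def)
qed

lemma shift_integrable:
  fixes g :: "'a::euclidean_space \<Rightarrow> 'b::{banach, second_countable_topology}"
  assumes [measurable]: "g \<in> borel_measurable borel"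
  shows "integrable lborel (\<lambda>x. g (c + x)) \<longleftrightarrow> integrable lborel g"
proof -
  have "integrable (distr lborel borel ((+) c)) g \<longleftrightarrow> integrable lborel (\<lambda>x. g (c + x))"
    by (rule integrable_distr_eq) auto
  then show ?thesis by (simp add: lborel_distr_plus)
qed

lemma shift_integral:
  fixes g :: "'a::euclidean_space \<Rightarrow> 'b::{banach, second_countable_topology}"
  assumes [measurable]: "g \<in> borel_measurable borel"
  shows "(LINT x|lborel. g (c + x)) = (LINT x|lborel. g x)"
proof -
  have "integral\<^sup>L (distr lborel borel ((+) c)) g = (LINT x|lborel. g (c + x))"
    by (rule integral_distr) auto
  then show ?thesis by (simp add: lborel_distr_plus)
qed

lemma shift_AE:
  fixes P :: "'a::euclidean_space \<Rightarrow> bool"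
  assumes [measurable]: "Measurable.pred borel P" and ae: "AE x in lborel. P x"
  shows "AE x in lborel. P (c + x)"
proof -
  have "(AE x in distr lborel borel ((+) c). P x) \<longleftrightarrow> (AE x in lborel. P (c + x))"
    by (rule AE_distr_iff) auto
  moreover have "distr lborel borel ((+) c) = lborel" by (rule lborel_distr_plus)
  ultimately have "(AE x in lborel. P x) \<longleftrightarrow> (AE x in lborel. P (c + x))" by metis
  then show ?thesis using ae by blast
qed

lemma L2_meas: "h \<in> L2 \<Longrightarrow> h \<in> borel_measurable borel"
  by (simp add: L2_def)

lemma L2_int: "h \<in> L2 \<Longrightarrow> integrable lborel (\<lambda>x. (cmod (h x))\<^sup>2)"
  by (simp add: L2_def)

lemma L2_transl:
  fixes f :: "'a::euclidean_space \<Rightarrow> complex"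
  assumes f: "f \<in> L2" shows "transl y f \<in> L2"
proof -
  have [measurable]: "f \<in> borel_measurable borel" using L2_meas[OF f] .
  have m: "transl y f \<in> borel_measurable borel" unfolding transl_def by measurable
  have "integrable lborel (\<lambda>x. (cmod (f ((- y) + x)))\<^sup>2)"
    by (subst shift_integrable) (use L2_int[OF f] in auto)
  then show ?thesis using m by (simp add: L2_def transl_def)
qed

lemma L2_zero: "(\<lambda>x. 0) \<in> L2" by (simp add: L2_def)

lemma L2_add:
  assumes "h1 \<in> L2" "h2 \<in> L2" shows "(\<lambda>x. h1 x + h2 x) \<in> L2"
proof -
  have [measurable]: "h1 \<in> borel_measurable borel" "h2 \<in> borel_measurable borel" using assms L2_meas by auto
  have "integrable lborel (\<lambda>x. (cmod (h1 x + h2 x))\<^sup>2)"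
  proof (rule Bochner_Integration.integrable_bound)
    show "integrable lborel (\<lambda>x. 2 * (cmod (h1 x))\<^sup>2 + 2 * (cmod (h2 x))\<^sup>2)"
      by (intro Bochner_Integration.integrable_add integrable_mult_right L2_int assms)
    show "AE x in lborel. norm ((cmod (h1 x + h2 x))\<^sup>2) \<le> norm (2 * (cmod (h1 x))\<^sup>2 + 2 * (cmod (h2 x))\<^sup>2)"
    proof (rule AE_I2)
      fix x
      have t: "cmod (h1 x + h2 x) \<le> cmod (h1 x) + cmod (h2 x)" by (rule norm_triangle_ineq)
      have "(cmod (h1 x + h2 x))\<^sup>2 \<le> (cmod (h1 x) + cmod (h2 x))\<^sup>2" by (rule power_mono[OF t]) simp
      also have "\<dots> \<le> 2 * (cmod (h1 x))\<^sup>2 + 2 * (cmod (h2 x))\<^sup>2"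
        using power2_sum[of "cmod (h1 x)" "cmod (h2 x)"] power2_diff[of "cmod (h1 x)" "cmod (h2 x)"]
          zero_le_power2[of "cmod (h1 x) - cmod (h2 x)"] by linarith
      finally show "norm ((cmod (h1 x + h2 x))\<^sup>2) \<le> norm (2 * (cmod (h1 x))\<^sup>2 + 2 * (cmod (h2 x))\<^sup>2)" by simp
    qed
  qed measurable
  then show ?thesis by (simp add: L2_def)
qed

lemma L2_cmult:
  assumes "h \<in> L2" shows "(\<lambda>x. c * h x) \<in> L2"
proof -
  have [measurable]: "h \<in> borel_measurable borel" using assms L2_meas by auto
  have "integrable lborel (\<lambda>x. (cmod c)\<^sup>2 * (cmod (h x))\<^sup>2)" using L2_int[OF assms] by auto
  then show ?thesis by (simp add: L2_def norm_mult power_mult_distrib)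
qed

lemma L2_sum:
  assumes "finite F" "\<And>k. k \<in> F \<Longrightarrow> g k \<in> L2"
  shows "(\<lambda>x. \<Sum>k\<in>F. c k * g k x) \<in> L2"
  using assms
proof (induction F rule: finite_induct)
  case empty then show ?case by (simp add: L2_zero)
next
  case (insert k F)
  then show ?case by (simp add: L2_add L2_cmult)
qed

lemma L2_prod_bound:
  fixes h g :: "'a::euclidean_space \<Rightarrow> complex"
  shows "cmod (h x) * cmod (g x) \<le> (cmod (h x))\<^sup>2 + (cmod (g x))\<^sup>2"
proof -
  have "0 \<le> (cmod (h x) - cmod (g x))\<^sup>2" by simp
  moreover have "0 \<le> cmod (h x) * cmod (g x)" by simp
  ultimately show ?thesis using power2_diff[of "cmod (h x)" "cmod (g x)"] by linarith
qed

lemma L2_integrable_ip: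
  assumes h: "h \<in> L2" and g: "g \<in> L2"
  shows "integrable lborel (\<lambda>x. h x * cnj (g x))"
proof -
  have [measurable]: "h \<in> borel_measurable borel" "g \<in> borel_measurable borel" using assms L2_meas by auto
  show ?thesis
  proof (rule Bochner_Integration.integrable_bound)
    show "integrable lborel (\<lambda>x. (cmod (h x))\<^sup>2 + (cmod (g x))\<^sup>2)"
      by (intro Bochner_Integration.integrable_add L2_int assms)
    show "AE x in lborel. norm (h x * cnj (g x)) \<le> norm ((cmod (h x))\<^sup>2 + (cmod (g x))\<^sup>2)"
      by (rule AE_I2) (simp add: norm_mult L2_prod_bound)
  qed measurable
qed

lemma L2_integrable_abs:
  assumes h: "h \<in> L2" and g: "g \<in> L2"
  shows "integrable lborel (\<lambda>x. cmod (h x) * cmod (g x))"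
proof -
  have [measurable]: "h \<in> borel_measurable borel" "g \<in> borel_measurable borel" using assms L2_meas by auto
  show ?thesis
  proof (rule Bochner_Integration.integrable_bound)
    show "integrable lborel (\<lambda>x. (cmod (h x))\<^sup>2 + (cmod (g x))\<^sup>2)"
      by (intro Bochner_Integration.integrable_add L2_int assms)
    show "AE x in lborel. norm (cmod (h x) * cmod (g x)) \<le> norm ((cmod (h x))\<^sup>2 + (cmod (g x))\<^sup>2)"
      by (rule AE_I2) (simp add: L2_prod_bound)
  qed measurable
qed

lemma l2norm_sq: "h \<in> L2 \<Longrightarrow> (l2norm h)\<^sup>2 = (LINT x|lborel. (cmod (h x))\<^sup>2)"
  unfolding l2norm_def by (simp add: integral_nonneg_AE)

lemma l2ip_self: "h \<in> L2 \<Longrightarrow> l2ip h h = complex_of_real ((l2norm h)\<^sup>2)"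
  unfolding l2ip_def by (simp add: l2norm_sq complex_norm_square[symmetric] del: of_real_power)

lemma l2ip_cnj: "l2ip g h = cnj (l2ip h g)"
  unfolding l2ip_def by (subst Bochner_Integration.integral_cnj[symmetric]) (simp add: mult.commute)

lemma l2ip_cnj2: "cnj (l2ip g h) = l2ip h g"
  by (subst l2ip_cnj) simp

lemma l2ip_sum_left:
  assumes fF: "finite F" and g: "\<And>j. j \<in> F \<Longrightarrow> g j \<in> L2" and g': "g' \<in> L2"
  shows "l2ip (\<lambda>x. \<Sum>j\<in>F. c j * g j x) g' = (\<Sum>j\<in>F. c j * l2ip (g j) g')"
proof -
  have "l2ip (\<lambda>x. \<Sum>j\<in>F. c j * g j x) g' = (LINT x|lborel. (\<Sum>j\<in>F. c j * (g j x * cnj (g' x))))"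
    unfolding l2ip_def by (simp add: sum_distrib_right mult.assoc)
  also have "\<dots> = (\<Sum>j\<in>F. LINT x|lborel. c j * (g j x * cnj (g' x)))"
    by (rule Bochner_Integration.integral_sum) (auto intro!: integrable_mult_right L2_integrable_ip g g')
  also have "\<dots> = (\<Sum>j\<in>F. c j * l2ip (g j) g')"
    unfolding l2ip_def by simp
  finally show ?thesis .
qed

lemma l2ip_sum_right:
  assumes fF: "finite F" and g: "\<And>j. j \<in> F \<Longrightarrow> g j \<in> L2" and g': "g' \<in> L2"
  shows "l2ip g' (\<lambda>x. \<Sum>j\<in>F. c j * g j x) = (\<Sum>j\<in>F. cnj (c j) * l2ip g' (g j))"
proof -
  have "l2ip g' (\<lambda>x. \<Sum>j\<in>F. c j * g j x) = cnj (l2ip (\<lambda>x. \<Sum>j\<in>F. c j * g j x) g')" by (rule l2ip_cnj)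
  also have "\<dots> = cnj (\<Sum>j\<in>F. c j * l2ip (g j) g')" by (simp only: l2ip_sum_left[OF assms])
  also have "\<dots> = (\<Sum>j\<in>F. cnj (c j) * cnj (l2ip (g j) g'))" by simp
  also have "\<dots> = (\<Sum>j\<in>F. cnj (c j) * l2ip g' (g j))" by (simp only: l2ip_cnj2)
  finally show ?thesis .
qed

lemma discr:
  fixes U V W :: real
  assumes q: "\<And>t. 0 \<le> t\<^sup>2 * U - 2 * t * W + V" and U: "0 \<le> U"
  shows "W\<^sup>2 \<le> U * V"
proof (cases "U = 0")
  case True
  have "W = 0"
  proof (rule ccontr)
    assume W: "W \<noteq> 0"
    have "0 \<le> ((V + 1) / (2 * W))\<^sup>2 * U - 2 * ((V + 1) / (2 * W)) * W + V" by (rule q)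
    moreover have "2 * ((V + 1) / (2 * W)) * W = V + 1" using W by (simp add: field_simps)
    ultimately show False using True by simp
  qed
  then show ?thesis using True by simp
next
  case False
  then have Up: "U > 0" using U by simp
  have "0 \<le> (W / U)\<^sup>2 * U - 2 * (W / U) * W + V" by (rule q)
  also have "\<dots> = V - W\<^sup>2 / U" using Up by (simp add: field_simps power2_eq_square)
  finally have "W\<^sup>2 / U \<le> V" by simp
  then show ?thesis using Up by (simp add: field_simps mult.commute)
qed

lemma CS:
  assumes h: "h \<in> L2" and g: "g \<in> L2"
  shows "(cmod (l2ip h g))\<^sup>2 \<le> (l2norm h)\<^sup>2 * (l2norm g)\<^sup>2"
proof -
  define U where "U = (LINT x|lborel. (cmod (h x))\<^sup>2)"
  define V where "V = (LINT x|lborel. (cmod (g x))\<^sup>2)"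
  define W where "W = (LINT x|lborel. cmod (h x) * cmod (g x))"
  have iU: "integrable lborel (\<lambda>x. (cmod (h x))\<^sup>2)" by (rule L2_int[OF h])
  have iV: "integrable lborel (\<lambda>x. (cmod (g x))\<^sup>2)" by (rule L2_int[OF g])
  have iW: "integrable lborel (\<lambda>x. cmod (h x) * cmod (g x))" by (rule L2_integrable_abs[OF h g])
  have "cmod (l2ip h g) \<le> (LINT x|lborel. cmod (h x * cnj (g x)))"
    unfolding l2ip_def by (rule integral_norm_bound)
  also have "\<dots> = W" by (simp add: W_def norm_mult)
  finally have c1: "cmod (l2ip h g) \<le> W" .
  have q: "0 \<le> t\<^sup>2 * U - 2 * t * W + V" for t
  proof -
    have "0 \<le> (LINT x|lborel. (t * cmod (h x) - cmod (g x))\<^sup>2)"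
      by (rule integral_nonneg_AE) auto
    also have "(LINT x|lborel. (t * cmod (h x) - cmod (g x))\<^sup>2)
        = (LINT x|lborel. t\<^sup>2 * (cmod (h x))\<^sup>2 - 2 * t * (cmod (h x) * cmod (g x)) + (cmod (g x))\<^sup>2)"
      by (rule Bochner_Integration.integral_cong) (auto simp: power2_eq_square algebra_simps)
    also have "\<dots> = t\<^sup>2 * U - 2 * t * W + V"
      using iU iV iW by (simp add: U_def V_def W_def)
    finally show ?thesis .
  qed
  have U0: "0 \<le> U" unfolding U_def by (rule integral_nonneg_AE) auto
  have W0: "0 \<le> W" unfolding W_def by (rule integral_nonneg_AE) auto
  have "(cmod (l2ip h g))\<^sup>2 \<le> W\<^sup>2" using c1 by (simp add: power_mono)
  also have "\<dots> \<le> U * V" by (rule discr[OF q U0])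
  finally show ?thesis by (simp add: l2norm_sq h g U_def V_def)
qed

lemma gram_shift:
  fixes f :: "'a::euclidean_space \<Rightarrow> complex"
  assumes f: "f \<in> L2"
  shows "l2ip (transl u f) (transl v f) = l2ip (transl (u - v) f) f"
proof -
  have [measurable]: "f \<in> borel_measurable borel" using L2_meas[OF f] .
  define G where "G x = f (x - u) * cnj (f (x - v))" for x
  have [measurable]: "G \<in> borel_measurable borel" unfolding G_def by measurable
  have "l2ip (transl u f) (transl v f) = (LINT x|lborel. G x)" by (simp add: l2ip_def transl_def G_def)
  also have "\<dots> = (LINT x|lborel. G (v + x))" by (rule shift_integral[symmetric]) measurable
  also have "\<dots> = l2ip (transl (u - v) f) f"
    unfolding l2ip_def transl_def G_def by (simp add: algebra_simps)
  finally show ?thesis .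
qed

definition vr :: "int^'n \<Rightarrow> real^'n" where "vr k = (\<chi> i. real_of_int (k $ i))"

lemma vr_diff: "vr (j - k) = vr j - vr k" by (simp add: vr_def vec_eq_iff)
lemma vr_zero[simp]: "vr 0 = 0" by (simp add: vr_def vec_eq_iff)
lemma transl_zero[simp]: "transl 0 f = f" by (simp add: transl_def)

locale ctx =
  fixes A :: "real^'n^'n" and f :: "real^'n \<Rightarrow> complex" and K :: "(real^'n) set"
  assumes inv: "invertible A" and fL2: "f \<in> L2" and K: "compact K"
    and fK: "AE x in lborel. x \<notin> K \<longrightarrow> f x = 0" and fnz: "\<not> (AE x in lborel. f x = 0)"
begin

definition gg :: "int^'n \<Rightarrow> real^'n \<Rightarrow> complex" where "gg k = transl (A *v vr k) f"
definition aa :: "int^'n \<Rightarrow> complex" where "aa m = l2ip (gg m) (gg 0)"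

lemma gg_L2: "gg k \<in> L2" unfolding gg_def by (rule L2_transl[OF fL2])

lemma gg0: "gg 0 = f" by (simp add: gg_def)

lemma gram: "l2ip (gg j) (gg k) = aa (j - k)"
  unfolding aa_def gg_def
  by (simp add: gram_shift[OF fL2] vr_diff matrix_vector_mult_diff_distrib)

lemma herm: "aa (- m) = cnj (aa m)"
proof -
  have "aa (- m) = l2ip (gg 0) (gg m)" using gram[of 0 m] by simp
  also have "\<dots> = cnj (aa m)" unfolding aa_def by (rule l2ip_cnj)
  finally show ?thesis .
qed

lemma Kborel[measurable]: "K \<in> sets borel"
  using compact_imp_closed[OF K] by (rule borel_closed)

definition B0 :: real where "B0 = (SOME b. b \<ge> 0 \<and> (\<forall>x\<in>K. norm x \<le> b))"

lemma B0: "B0 \<ge> 0" "\<And>x. x \<in> K \<Longrightarrow> norm x \<le> B0"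
proof -
  obtain b where b: "\<forall>x\<in>K. norm x \<le> b" using compact_imp_bounded[OF K] unfolding bounded_iff by blast
  then have "\<exists>b. b \<ge> 0 \<and> (\<forall>x\<in>K. norm x \<le> b)" by (intro exI[of _ "max b 0"]) auto
  then have "B0 \<ge> 0 \<and> (\<forall>x\<in>K. norm x \<le> B0)" unfolding B0_def by (rule someI_ex)
  then show "B0 \<ge> 0" "\<And>x. x \<in> K \<Longrightarrow> norm x \<le> B0" by auto
qed

definition Ci :: real where "Ci = (SOME C. C > 0 \<and> (\<forall>m. norm (vr m) \<le> C * norm (A *v vr m)))"

lemma Ci: "Ci > 0" "norm (vr m) \<le> Ci * norm (A *v vr m)"
proof -
  obtain A' :: "real^'n^'n" where A': "A' ** A = mat 1" using inv unfolding invertible_def by blast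
  have "bounded_linear ((*v) A')" by simp
  then obtain C where C: "C > 0" "\<And>x. norm (A' *v x) \<le> norm x * C" using bounded_linear.pos_bounded by blast
  have "norm (vr m) \<le> C * norm (A *v vr m)" for m
  proof -
    have "vr m = A' *v (A *v vr m)" by (simp add: matrix_vector_mul_assoc A')
    then show ?thesis using C(2)[of "A *v vr m"] by (simp add: mult.commute)
  qed
  then have "\<exists>C. C > 0 \<and> (\<forall>m. norm (vr m) \<le> C * norm (A *v vr m))" using C(1) by blast
  then have "Ci > 0 \<and> (\<forall>m. norm (vr m) \<le> Ci * norm (A *v vr m))" unfolding Ci_def by (rule someI_ex)
  then show "Ci > 0" "norm (vr m) \<le> Ci * norm (A *v vr m)" by auto
qed

definition RR :: nat where "RR = nat \<lceil>Ci * (2 * B0)\<rceil>"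

lemma in_ibox:
  assumes "norm (A *v vr m) \<le> 2 * B0" shows "m \<in> ibox RR"
proof -
  have "\<bar>m $ i\<bar> \<le> int RR" for i
  proof -
    have "\<bar>real_of_int (m $ i)\<bar> = \<bar>vr m $ i\<bar>" by (simp add: vr_def)
    also have "\<dots> \<le> norm (vr m)" by (rule component_le_norm_cart)
    also have "\<dots> \<le> Ci * norm (A *v vr m)" by (rule Ci)
    also have "\<dots> \<le> Ci * (2 * B0)" using assms Ci(1) by (simp add: mult_left_mono)
    also have "\<dots> \<le> real_of_int (int RR)"
    proof -
      have y0: "Ci * (2 * B0) \<ge> 0" using Ci(1) B0(1) by simp
      then have "\<lceil>Ci * (2 * B0)\<rceil> \<ge> 0" using zero_le_ceiling[of "Ci * (2 * B0)"] by linarith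
      then have "int RR = \<lceil>Ci * (2 * B0)\<rceil>" unfolding RR_def by (rule nat_0_le)
      then show ?thesis by (simp add: le_of_int_ceiling)
    qed
    finally show ?thesis by linarith
  qed
  then show ?thesis by (simp add: ibox_def)
qed

lemma K_diff: "x \<in> K \<Longrightarrow> y \<in> K \<Longrightarrow> norm (x - y) \<le> 2 * B0"
  using norm_triangle_ineq4[of x y] B0(2)[of x] B0(2)[of y] by linarith

lemma fK_shift: "AE x in lborel. x - w \<notin> K \<longrightarrow> f (x - w) = 0"
proof -
  have [measurable]: "f \<in> borel_measurable borel" using L2_meas[OF fL2] .
  have "AE x in lborel. (- w + x) \<notin> K \<longrightarrow> f (- w + x) = 0"
    by (rule shift_AE[OF _ fK]) measurable
  then show ?thesis by simp
qed

lemma aa_supp: "m \<notin> ibox RR \<Longrightarrow> aa m = 0"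
proof -
  assume m: "m \<notin> ibox RR"
  define w where "w = A *v vr m"
  have "aa m = (LINT x|lborel. f (x - w) * cnj (f x))"
    by (simp add: aa_def gg0 l2ip_def gg_def transl_def w_def)
  also have "\<dots> = 0"
  proof (rule integral_eq_zero_AE)
    show "AE x in lborel. f (x - w) * cnj (f x) = 0"
      using fK fK_shift[of w]
    proof eventually_elim
      case (elim x)
      show ?case
      proof (cases "x \<in> K \<and> x - w \<in> K")
        case True
        then have "norm (x - (x - w)) \<le> 2 * B0" using K_diff by blast
        then have "m \<in> ibox RR" using in_ibox by (simp add: w_def)
        with m show ?thesis by simp
      qed (use elim in auto)
    qed
  qed
  finally show ?thesis .
qed

lemma aa0: "aa 0 = complex_of_real ((l2norm f)\<^sup>2)" and aa0_pos: "(l2norm f)\<^sup>2 > 0"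
proof -
  show "aa 0 = complex_of_real ((l2norm f)\<^sup>2)" unfolding aa_def gg0 by (rule l2ip_self[OF fL2])
  have [measurable]: "f \<in> borel_measurable borel" using L2_meas[OF fL2] .
  have ge: "(l2norm f)\<^sup>2 \<ge> 0" by simp
  have "(l2norm f)\<^sup>2 \<noteq> 0"
  proof
    assume "(l2norm f)\<^sup>2 = 0"
    then have "(LINT x|lborel. (cmod (f x))\<^sup>2) = 0" using l2norm_sq[OF fL2] by simp
    then have "AE x in lborel. (cmod (f x))\<^sup>2 = 0"
      using integral_nonneg_eq_0_iff_AE[OF L2_int[OF fL2]] by simp
    then have "AE x in lborel. f x = 0" by simp
    with fnz show False by simp
  qed
  with ge show "(l2norm f)\<^sup>2 > 0" by simp
qed

end

context ctx begin

definition Ks :: "int^'n \<Rightarrow> (real^'n) set" where "Ks k = {x. x - A *v vr k \<in> K}"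

lemma Ks_meas[measurable]: "Ks k \<in> sets borel"
  unfolding Ks_def by measurable

lemma gg_norm: "(l2norm (gg k))\<^sup>2 = (l2norm f)\<^sup>2"
proof -
  have [measurable]: "f \<in> borel_measurable borel" using L2_meas[OF fL2] .
  have "(l2norm (gg k))\<^sup>2 = (LINT x|lborel. (cmod (gg k x))\<^sup>2)" by (rule l2norm_sq[OF gg_L2])
  also have "\<dots> = (LINT x|lborel. (cmod (f (- (A *v vr k) + x)))\<^sup>2)" by (simp add: gg_def transl_def)
  also have "\<dots> = (LINT x|lborel. (cmod (f x))\<^sup>2)" by (rule shift_integral) measurable
  also have "\<dots> = (l2norm f)\<^sup>2" by (simp add: l2norm_sq[OF fL2])
  finally show ?thesis .
qed

lemma bessel_k:
  assumes h: "h \<in> L2"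
  shows "(cmod (l2ip h (gg k)))\<^sup>2 \<le> (l2norm f)\<^sup>2 * (LINT x|lborel. (cmod (h x))\<^sup>2 * indicator (Ks k) x)"
proof -
  have [measurable]: "f \<in> borel_measurable borel" "h \<in> borel_measurable borel" using L2_meas fL2 h by auto
  define hk where "hk x = (if x \<in> Ks k then h x else 0)" for x
  have [measurable]: "hk \<in> borel_measurable borel" unfolding hk_def by measurable
  have hkL2: "hk \<in> L2"
  proof -
    have "integrable lborel (\<lambda>x. (cmod (hk x))\<^sup>2)"
    proof (rule Bochner_Integration.integrable_bound)
      show "integrable lborel (\<lambda>x. (cmod (h x))\<^sup>2)" by (rule L2_int[OF h])
      show "AE x in lborel. norm ((cmod (hk x))\<^sup>2) \<le> norm ((cmod (h x))\<^sup>2)"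
        by (rule AE_I2) (simp add: hk_def)
    qed measurable
    then show ?thesis by (simp add: L2_def)
  qed
  have eq: "l2ip h (gg k) = l2ip hk (gg k)"
    unfolding l2ip_def
  proof (rule integral_cong_AE)
    show "(\<lambda>x. h x * cnj (gg k x)) \<in> borel_measurable lborel" unfolding gg_def transl_def by measurable
    show "(\<lambda>x. hk x * cnj (gg k x)) \<in> borel_measurable lborel" unfolding gg_def transl_def by measurable
    show "AE x in lborel. h x * cnj (gg k x) = hk x * cnj (gg k x)"
      using fK_shift[of "A *v vr k"] by eventually_elim (auto simp: hk_def gg_def transl_def Ks_def)
  qed
  have "(cmod (l2ip h (gg k)))\<^sup>2 \<le> (l2norm hk)\<^sup>2 * (l2norm (gg k))\<^sup>2"
    unfolding eq by (rule CS[OF hkL2 gg_L2])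
  also have "(l2norm hk)\<^sup>2 = (LINT x|lborel. (cmod (h x))\<^sup>2 * indicator (Ks k) x)"
    unfolding l2norm_sq[OF hkL2] by (rule Bochner_Integration.integral_cong) (auto simp: hk_def)
  finally show ?thesis by (simp add: gg_norm mult.commute)
qed

lemma count_bound:
  assumes fF: "finite F"
  shows "(\<Sum>k\<in>F. indicator (Ks k) x) \<le> real (card (ibox RR :: (int^'n) set))"
proof -
  define S where "S = {k\<in>F. x \<in> Ks k}"
  have "(\<Sum>k\<in>F. indicator (Ks k) x :: real) = (\<Sum>k\<in>F. if x \<in> Ks k then 1 else 0)"
    by (intro sum.cong) (auto simp: indicator_def)
  also have "\<dots> = real (card S)"
  proof -
    have FS: "F \<inter> {k. x \<in> Ks k} = S" by (auto simp: S_def)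
    show ?thesis using FS by (simp add: sum.If_cases fF)
  qed
  also have "\<dots> \<le> real (card (ibox RR :: (int^'n) set))"
  proof (cases "S = {}")
    case True then show ?thesis by simp
  next
    case False
    then obtain k1 where k1: "k1 \<in> S" by blast
    have "S \<subseteq> (\<lambda>m. k1 + m) ` ibox RR"
    proof
      fix k assume k: "k \<in> S"
      have "x - A *v vr k1 \<in> K" "x - A *v vr k \<in> K" using k k1 by (auto simp: S_def Ks_def)
      then have "norm ((x - A *v vr k1) - (x - A *v vr k)) \<le> 2 * B0" by (rule K_diff)
      then have "norm (A *v vr (k - k1)) \<le> 2 * B0" by (simp add: vr_diff matrix_vector_mult_diff_distrib)
      then have "k - k1 \<in> ibox RR" by (rule in_ibox)
      then show "k \<in> (\<lambda>m. k1 + m) ` ibox RR" by (rule image_eqI[rotated]) simp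
    qed
    then have "card S \<le> card ((\<lambda>m. k1 + m) ` ibox RR)" by (rule card_mono[OF finite_imageI[OF finite_ibox]])
    also have "\<dots> \<le> card (ibox RR :: (int^'n) set)" by (rule card_image_le[OF finite_ibox])
    finally show ?thesis by simp
  qed
  finally show ?thesis .
qed

definition BB :: real where "BB = (l2norm f)\<^sup>2 * real (card (ibox RR :: (int^'n) set))"

lemma BB_pos: "BB > 0"
proof -
  have "ibox RR \<noteq> ({} :: (int^'n) set)" using zero_in_ibox by blast
  then have "card (ibox RR :: (int^'n) set) > 0" by (simp add: card_gt_0_iff)
  then show ?thesis unfolding BB_def using aa0_pos by simp
qed

lemma bessel_finite:
  assumes h: "h \<in> L2" and fF: "finite F"
  shows "(\<Sum>k\<in>F. (cmod (l2ip h (gg k)))\<^sup>2) \<le> BB * (l2norm h)\<^sup>2"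
proof -
  have [measurable]: "h \<in> borel_measurable borel" using L2_meas h by auto
  have ih: "integrable lborel (\<lambda>x. (cmod (h x))\<^sup>2)" by (rule L2_int[OF h])
  have ik: "integrable lborel (\<lambda>x. (cmod (h x))\<^sup>2 * indicator (Ks k) x)" for k
  proof -
    have "Ks k \<in> sets lborel" by simp
    from integrable_mult_indicator[OF this ih] show ?thesis by (simp add: mult.commute)
  qed
  have "(\<Sum>k\<in>F. (cmod (l2ip h (gg k)))\<^sup>2) \<le> (\<Sum>k\<in>F. (l2norm f)\<^sup>2 * (LINT x|lborel. (cmod (h x))\<^sup>2 * indicator (Ks k) x))"
    by (rule sum_mono) (rule bessel_k[OF h])
  also have "\<dots> = (l2norm f)\<^sup>2 * (\<Sum>k\<in>F. LINT x|lborel. (cmod (h x))\<^sup>2 * indicator (Ks k) x)"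
    by (simp add: sum_distrib_left)
  also have "(\<Sum>k\<in>F. LINT x|lborel. (cmod (h x))\<^sup>2 * indicator (Ks k) x) = (LINT x|lborel. (\<Sum>k\<in>F. (cmod (h x))\<^sup>2 * indicator (Ks k) x))"
    by (rule Bochner_Integration.integral_sum[symmetric]) (rule ik)
  also have "(LINT x|lborel. (\<Sum>k\<in>F. (cmod (h x))\<^sup>2 * indicator (Ks k) x))
      \<le> (LINT x|lborel. (cmod (h x))\<^sup>2 * real (card (ibox RR :: (int^'n) set)))"
  proof (rule integral_mono)
    show "integrable lborel (\<lambda>x. \<Sum>k\<in>F. (cmod (h x))\<^sup>2 * indicator (Ks k) x)"
      using ik by auto
    show "integrable lborel (\<lambda>x. (cmod (h x))\<^sup>2 * real (card (ibox RR :: (int^'n) set)))"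
      using ih by auto
    fix x
    have "(\<Sum>k\<in>F. (cmod (h x))\<^sup>2 * indicator (Ks k) x) = (cmod (h x))\<^sup>2 * (\<Sum>k\<in>F. indicator (Ks k) x)"
      by (simp add: sum_distrib_left)
    also have "\<dots> \<le> (cmod (h x))\<^sup>2 * real (card (ibox RR :: (int^'n) set))"
      by (rule mult_left_mono[OF count_bound[OF fF]]) simp
    finally show "(\<Sum>k\<in>F. (cmod (h x))\<^sup>2 * indicator (Ks k) x) \<le> (cmod (h x))\<^sup>2 * real (card (ibox RR :: (int^'n) set))" .
  qed
  then have "(l2norm f)\<^sup>2 * (LINT x|lborel. (\<Sum>k\<in>F. (cmod (h x))\<^sup>2 * indicator (Ks k) x))
      \<le> (l2norm f)\<^sup>2 * (LINT x|lborel. (cmod (h x))\<^sup>2 * real (card (ibox RR :: (int^'n) set)))"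
    by (rule mult_left_mono) simp
  also have "\<dots> = BB * (l2norm h)\<^sup>2" by (simp add: BB_def l2norm_sq[OF h])
  finally show ?thesis .
qed

lemma bessel: "bessel_seq gg UNIV"
  unfolding bessel_seq_def
proof (intro conjI ballI exI[of _ BB])
  show "\<And>k. gg k \<in> L2" by (rule gg_L2)
  fix h :: "real^'n \<Rightarrow> complex" assume h: "h \<in> L2"
  show sm: "(\<lambda>k. (cmod (l2ip h (gg k)))\<^sup>2) summable_on UNIV"
    by (rule nonneg_bdd_above_summable_on) (auto intro!: bdd_aboveI[where M="BB * (l2norm h)\<^sup>2"] bessel_finite[OF h])
  show "(\<Sum>\<^sub>\<infinity>k\<in>UNIV. (cmod (l2ip h (gg k)))\<^sup>2) \<le> BB * (l2norm h)\<^sup>2"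
    by (rule infsum_le_finite_sums[OF sm]) (rule bessel_finite[OF h])
qed

end

lemma infsum_supp:
  fixes f :: "'a \<Rightarrow> real"
  assumes T: "finite T" and z: "\<And>x. x \<in> S \<Longrightarrow> x \<notin> T \<Longrightarrow> f x = 0"
  shows "infsum f S = sum f (S \<inter> T)"
proof -
  have "infsum f S = infsum f (S \<inter> T)"
    by (rule infsum_cong_neutral) (use z in auto)
  also have "\<dots> = sum f (S \<inter> T)" using T by simp
  finally show ?thesis .
qed

context ctx begin

definition comb :: "(int^'n) set \<Rightarrow> (int^'n \<Rightarrow> complex) \<Rightarrow> real^'n \<Rightarrow> complex" where
  "comb F c = (\<lambda>x. \<Sum>j\<in>F. c j * gg j x)"

lemma comb_L2: "finite F \<Longrightarrow> comb F c \<in> L2"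
  unfolding comb_def by (rule L2_sum) (auto intro: gg_L2)

lemma comb_ip: "finite F \<Longrightarrow> l2ip (comb F c) (gg k) = Gc F c aa k"
  unfolding comb_def Gc_def by (simp add: l2ip_sum_left gg_L2 gram)

lemma comb_norm: "finite F \<Longrightarrow> (l2norm (comb F c))\<^sup>2 = Re (Q1 F c aa)"
proof -
  assume fF: "finite F"
  have "complex_of_real ((l2norm (comb F c))\<^sup>2) = l2ip (comb F c) (comb F c)"
    by (rule l2ip_self[OF comb_L2[OF fF], symmetric])
  also have "\<dots> = (\<Sum>k\<in>F. cnj (c k) * l2ip (comb F c) (gg k))"
    by (subst (2) comb_def) (rule l2ip_sum_right[OF fF gg_L2 comb_L2[OF fF]])
  also have "\<dots> = Q1 F c aa" by (simp add: comb_ip[OF fF] Q1_Gc)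
  finally show ?thesis by (metis Re_complex_of_real)
qed

lemma comb_span: "finite F \<Longrightarrow> comb F c \<in> closed_span gg UNIV"
proof -
  assume fF: "finite F"
  have "l2norm (\<lambda>x. comb F c x - (\<Sum>k\<in>F. c k * gg k x)) = 0"
    by (simp add: comb_def l2norm_def)
  then have "\<forall>e>0. \<exists>F' c'. finite F' \<and> F' \<subseteq> UNIV \<and> l2norm (\<lambda>x. comb F c x - (\<Sum>k\<in>F'. c' k * gg k x)) < e"
    using fF by (intro allI impI exI[of _ F] exI[of _ c]) auto
  then show ?thesis unfolding closed_span_def using comb_L2[OF fF] by blast
qed

lemma comb_infsum:
  assumes F: "F \<subseteq> ibox N"
  shows "(\<Sum>\<^sub>\<infinity>k\<in>S. (cmod (l2ip (comb F c) (gg k)))\<^sup>2) = (\<Sum>k\<in>S \<inter> ibox (N + RR). (cmod (Gc F c aa k))\<^sup>2)"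
proof -
  have fF: "finite F" using finite_subset[OF F finite_ibox] .
  show ?thesis
    unfolding comb_ip[OF fF]
    by (rule infsum_supp) (auto simp: Gc_supp[OF F aa_supp])
qed

definition pp :: "real^'n \<Rightarrow> real" where "pp x = Re (sy (ibox RR) aa x)"
definition S0 :: real where "S0 = (\<Sum>m\<in>ibox RR. cmod (aa m))"

lemma pp_le: "pp x \<le> S0"
proof -
  have "Re (sy (ibox RR) aa x) \<le> cmod (sy (ibox RR) aa x)" by (rule complex_Re_le_cmod)
  also have "\<dots> \<le> (\<Sum>m\<in>ibox RR. cmod (aa m * ee (kd m x)))" unfolding sy_def by (rule norm_sum)
  also have "\<dots> = S0" by (simp add: S0_def norm_mult)
  finally show ?thesis by (simp add: pp_def)
qed

lemma pp_pos_somewhere: "\<exists>x. pp x > 0"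
proof (rule ccontr)
  assume "\<not> (\<exists>x. pp x > 0)"
  then have np: "pp x \<le> 0" for x by (simp add: not_less)
  define L where "L = RR + 1"
  have L: "2 * 0 + RR < L" by (simp add: L_def)
  have F: "{0} \<subseteq> (ibox 0 :: (int^'n) set)" by simp
  note e = sum_nonneg_sq_fh(1)[where a=aa and R=RR and c="\<lambda>_. 1", OF F aa_supp herm L]
  have "(\<Sum>t\<in>TT L. Re (sy (ibox RR) aa (gp L t)) * (cmod (fh {0} (\<lambda>_. 1) (gp L t)))\<^sup>2) \<le> 0"
    by (rule sum_nonpos) (simp add: mult_nonpos_nonneg np[unfolded pp_def])
  then have "real L ^ CARD('n) * Re (Q1 {0} (\<lambda>_. 1) aa) \<le> 0" using e by simp
  moreover have q1: "Re (Q1 {0} (\<lambda>_. 1) aa) > 0" using aa0 aa0_pos by (simp add: Q1_def)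
  moreover have lp: "real L ^ CARD('n) > 0" by (simp add: L_def)
  ultimately show False using mult_pos_pos[OF lp q1] by linarith
qed

lemma frame_low:
  assumes fr: "frame_seq gg UNIV"
  obtains Af where "Af > 0" "\<And>x. Af \<le> pp x"
proof -
  obtain Af Bf where Af: "Af > 0" and
    fr2: "\<And>h. h \<in> closed_span gg UNIV \<Longrightarrow> Af * (l2norm h)\<^sup>2 \<le> (\<Sum>\<^sub>\<infinity>k\<in>UNIV. (cmod (l2ip h (gg k)))\<^sup>2)"
    using fr unfolding frame_seq_def frame_for_def by blast
  have H: "Af * Re (Q1 (ibox N) c aa) \<le> (\<Sum>k\<in>ibox (N+RR). (cmod (Gc (ibox N) c aa k))\<^sup>2)" for N c
  proof -
    have "Af * Re (Q1 (ibox N) c aa) = Af * (l2norm (comb (ibox N) c))\<^sup>2" by (simp add: comb_norm)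
    also have "\<dots> \<le> (\<Sum>\<^sub>\<infinity>k\<in>UNIV. (cmod (l2ip (comb (ibox N) c) (gg k)))\<^sup>2)"
      by (rule fr2[OF comb_span]) simp
    also have "\<dots> = (\<Sum>k\<in>ibox (N+RR). (cmod (Gc (ibox N) c aa k))\<^sup>2)"
      using comb_infsum[where F="ibox N" and N=N and S=UNIV and c=c] by simp
    finally show ?thesis .
  qed
  have ba: "Af * pp x \<le> (pp x)\<^sup>2" for x
    unfolding pp_def by (rule box_arg[OF aa_supp herm H]) (use less_imp_le[OF Af] in auto)
  have cont: "continuous_on UNIV pp" unfolding pp_def by (rule cont_sy)
  have "Af \<le> pp x" for x by (rule conn_arg[OF cont ba Af pp_pos_somewhere])
  with Af that show ?thesis by blast
qed

lemma riesz:
  assumes Af: "Af > 0" and low: "\<And>x. Af \<le> pp x"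
  shows "riesz_seq gg UNIV"
  unfolding riesz_seq_def
proof (rule conjI)
  show "\<forall>k\<in>UNIV. gg k \<in> L2" by (simp add: gg_L2)
  show "\<exists>A B. 0 < A \<and> 0 < B \<and>
     (\<forall>F c. finite F \<and> F \<subseteq> UNIV \<longrightarrow>
        A * (\<Sum>k\<in>F. (cmod (c k))\<^sup>2) \<le> (l2norm (\<lambda>x. \<Sum>k\<in>F. c k * gg k x))\<^sup>2 \<and>
        (l2norm (\<lambda>x. \<Sum>k\<in>F. c k * gg k x))\<^sup>2 \<le> B * (\<Sum>k\<in>F. (cmod (c k))\<^sup>2))"
  proof (rule exI[of _ Af], rule exI[of _ "S0 + 1"], intro conjI allI impI)
  show "Af > 0" by (rule Af)
  show "S0 + 1 > 0" using pp_le[of 0] low[of 0] Af by linarith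
  fix F :: "(int^'n) set" and c :: "int^'n \<Rightarrow> complex" assume "finite F \<and> F \<subseteq> UNIV"
  then have fF: "finite F" by simp
  have eqn: "(l2norm (\<lambda>x. \<Sum>k\<in>F. c k * gg k x))\<^sup>2 = Re (Q1 F c aa)"
    using comb_norm[OF fF] by (simp add: comb_def)
  have low': "\<And>x. Af \<le> Re (sy (ibox RR) aa x)" using low by (simp add: pp_def)
  note rb = riesz_bounds[where a=aa and R=RR and c=c, OF aa_supp herm low' fF]
  show "Af * (\<Sum>k\<in>F. (cmod (c k))\<^sup>2) \<le> (l2norm (\<lambda>x. \<Sum>k\<in>F. c k * gg k x))\<^sup>2"
    using rb(1) eqn by simp
  have "Re (Q1 F c aa) \<le> S0 * (\<Sum>k\<in>F. (cmod (c k))\<^sup>2)" using rb(2) by (simp add: S0_def)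
  also have "\<dots> \<le> (S0 + 1) * (\<Sum>k\<in>F. (cmod (c k))\<^sup>2)"
    by (rule mult_right_mono) (auto intro: sum_nonneg)
  finally show "(l2norm (\<lambda>x. \<Sum>k\<in>F. c k * gg k x))\<^sup>2 \<le> (S0 + 1) * (\<Sum>k\<in>F. (cmod (c k))\<^sup>2)"
    using eqn by simp
  qed
qed

end

context ctx begin

lemma not_over:
  assumes Af: "Af > 0" and low: "\<And>x. Af \<le> pp x"
    and fr: "frame_for gg (UNIV - {j0}) (closed_span gg UNIV)"
  shows False
proof -
  obtain A' B' where A': "A' > 0" and
    fr2: "\<And>h. h \<in> closed_span gg UNIV \<Longrightarrow> A' * (l2norm h)\<^sup>2 \<le> (\<Sum>\<^sub>\<infinity>k\<in>UNIV - {j0}. (cmod (l2ip h (gg k)))\<^sup>2)"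
    using fr unfolding frame_for_def by blast
  define S where "S = S0 + Af"
  have low': "\<And>x. Af \<le> Re (sy (ibox RR) aa x)" using low by (simp add: pp_def)
  have up: "\<And>x. Re (sy (ibox RR) aa x) \<le> S" using pp_le Af by (simp add: S_def pp_def) (smt (verit) pp_le pp_def)
  have AfS: "Af \<le> S" using low'[of 0] up[of 0] by linarith
  have Spos: "S > 0" using Af AfS by linarith
  define q where "q = 1 - Af / S"
  have q0: "0 \<le> q" using AfS Spos by (simp add: q_def)
  have q1: "q < 1" using Af Spos by (simp add: q_def)
  define nf where "nf = (l2norm f)\<^sup>2"
  have nf: "nf > 0" unfolding nf_def by (rule aa0_pos)
  define \<delta> where "\<delta> = min (1/2) (A' / (4 * nf))"
  have \<delta>0: "\<delta> > 0" using A' nf by (simp add: \<delta>_def)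
  have "(\<lambda>M. q ^ M) \<longlonglongrightarrow> 0" by (rule LIMSEQ_power_zero) (use q0 q1 in simp)
  from order_tendstoD(2)[OF this \<delta>0] obtain M where qM: "q ^ M < \<delta>"
    by (auto simp: eventually_sequentially)
  obtain N0 where "{j0} \<subseteq> (ibox N0 :: (int^'n) set)" using exists_ibox[of "{j0}"] by blast
  then have j0: "j0 \<in> ibox N0" by simp
  define c where "c = (\<lambda>k. (\<Sum>n<M. neu aa RR S N0 j0 n k) / complex_of_real S)"
  define F :: "(int^'n) set" where "F = ibox (N0 + M * RR)"
  define h where "h = comb F c"
  have fF: "finite F" by (simp add: F_def)
  have Gc_eq: "Gc F c aa k = (if k = j0 then 1 else 0) - neu aa RR S N0 j0 M k" for k
    using neu_tele[where a=aa and R=RR and S=S and M=M and k=k, OF aa_supp j0] Spos by (simp add: F_def c_def)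
  have ns: "(\<Sum>k\<in>ibox (N0 + M*RR). (cmod (neu aa RR S N0 j0 M k))\<^sup>2) \<le> q ^ (2*M)"
    unfolding q_def by (rule neu_small[OF aa_supp herm j0 low' up Af])
  have nsupp: "neu aa RR S N0 j0 M k = 0" if "k \<notin> ibox (N0 + M*RR)" for k
    by (rule neu_supp[OF aa_supp j0 that])
  have sub1: "ibox (N0 + M*RR) \<subseteq> (ibox (N0 + M*RR + RR) :: (int^'n) set)" by (rule ibox_mono) simp
  have "A' * (l2norm h)\<^sup>2 \<le> (\<Sum>\<^sub>\<infinity>k\<in>UNIV - {j0}. (cmod (l2ip h (gg k)))\<^sup>2)"
    by (rule fr2) (simp add: h_def comb_span fF)
  also have "\<dots> = (\<Sum>k\<in>(UNIV - {j0}) \<inter> ibox (N0 + M*RR + RR). (cmod (Gc F c aa k))\<^sup>2)"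
    unfolding h_def by (rule comb_infsum) (simp add: F_def)
  also have "\<dots> = (\<Sum>k\<in>(UNIV - {j0}) \<inter> ibox (N0 + M*RR + RR). (cmod (neu aa RR S N0 j0 M k))\<^sup>2)"
    by (rule sum.cong) (auto simp: Gc_eq)
  also have "\<dots> \<le> (\<Sum>k\<in>ibox (N0 + M*RR + RR). (cmod (neu aa RR S N0 j0 M k))\<^sup>2)"
    by (rule sum_mono2) auto
  also have "\<dots> = (\<Sum>k\<in>ibox (N0 + M*RR). (cmod (neu aa RR S N0 j0 M k))\<^sup>2)"
    by (rule sum.mono_neutral_right[OF finite_ibox sub1]) (auto simp: nsupp)
  also have "\<dots> \<le> q ^ (2*M)" by (rule ns)
  finally have upper: "A' * (l2norm h)\<^sup>2 \<le> q ^ (2*M)" .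
  have j0M: "j0 \<in> ibox (N0 + M*RR)" using j0 ibox_mono[of N0 "N0 + M*RR"] by auto
  have "(cmod (neu aa RR S N0 j0 M j0))\<^sup>2 \<le> (\<Sum>k\<in>ibox (N0 + M*RR). (cmod (neu aa RR S N0 j0 M k))\<^sup>2)"
    by (rule member_le_sum[OF j0M]) auto
  also have "\<dots> \<le> (q ^ M)\<^sup>2" using ns by (simp add: power_mult[symmetric] mult.commute)
  finally have nj0: "cmod (neu aa RR S N0 j0 M j0) \<le> q ^ M"
    by (rule power2_le_imp_le) (use q0 in simp)
  have ip: "l2ip h (gg j0) = 1 - neu aa RR S N0 j0 M j0"
    unfolding h_def comb_ip[OF fF] Gc_eq by simp
  have "1 - q ^ M \<le> cmod (l2ip h (gg j0))"
    unfolding ip using norm_triangle_ineq2[of 1 "neu aa RR S N0 j0 M j0"] nj0 by simp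
  moreover have half: "1/2 \<le> 1 - q ^ M" using qM by (simp add: \<delta>_def)
  ultimately have "(1/2)\<^sup>2 \<le> (cmod (l2ip h (gg j0)))\<^sup>2" by (intro power_mono) auto
  also have "\<dots> \<le> (l2norm h)\<^sup>2 * (l2norm (gg j0))\<^sup>2"
    unfolding h_def by (rule CS[OF comb_L2[OF fF] gg_L2])
  also have "\<dots> = (l2norm h)\<^sup>2 * nf" by (simp add: gg_norm nf_def)
  finally have lowh: "1 / 4 \<le> (l2norm h)\<^sup>2 * nf" by (simp add: power2_eq_square)
  have "A' / (4 * nf) \<le> A' * (l2norm h)\<^sup>2"
  proof -
    have "1 / (4 * nf) \<le> (l2norm h)\<^sup>2" using lowh nf by (simp add: field_simps)
    then have "A' * (1 / (4 * nf)) \<le> A' * (l2norm h)\<^sup>2" by (rule mult_left_mono) (use A' in simp)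
    then show ?thesis by simp
  qed
  also note upper
  also have "q ^ (2*M) = (q ^ M)\<^sup>2" by (simp add: power_mult[symmetric] mult.commute)
  also have "\<dots> \<le> \<delta>\<^sup>2" using qM q0 by (intro power_mono) auto
  also have "\<dots> \<le> \<delta> * (1/2)"
  proof -
    have "\<delta> \<le> 1/2" by (simp add: \<delta>_def)
    then have "\<delta> * \<delta> \<le> \<delta> * (1/2)" by (rule mult_left_mono) (use \<delta>0 in simp)
    then show ?thesis by (simp add: power2_eq_square)
  qed
  also have "\<dots> < A' / (4 * nf)"
  proof -
    have "\<delta> \<le> A' / (4 * nf)" by (simp add: \<delta>_def)
    then show ?thesis using \<delta>0 by linarith
  qed
  finally show False by simp
qed

end

theorem mainTheorem11:
  fixes A :: "real^'n^'n" and f :: "real^'n \<Rightarrow> complex"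
  assumes "invertible A"
    and "f \<in> L2"
    and "\<exists>K. compact K \<and> (AE x in lborel. x \<notin> K \<longrightarrow> f x = 0)"
    and "\<not> (AE x in lborel. f x = 0)"
  defines "g \<equiv> (\<lambda>k::int^'n. transl (A *v (\<chi> i. real_of_int (k $ i))) f)"
  shows "bessel_seq g UNIV \<and>
         \<not> overcomplete_frame_seq g UNIV \<and>
         (frame_seq g UNIV \<longrightarrow> riesz_seq g UNIV)"
proof -
  obtain K where K: "compact K" "AE x in lborel. x \<notin> K \<longrightarrow> f x = 0" using assms(3) by blast
  interpret ctx A f K using assms(1,2,4) K by unfold_locales auto
  have geq: "g = gg" unfolding g_def by (rule ext) (simp add: gg_def vr_def)
  have b: "bessel_seq g UNIV" unfolding geq by (rule bessel)
  have r: "frame_seq g UNIV \<longrightarrow> riesz_seq g UNIV"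
  proof
    assume fs: "frame_seq g UNIV"
    then have fs': "frame_seq gg UNIV" by (simp add: geq)
    obtain Af where "Af > 0" "\<And>x. Af \<le> pp x" using frame_low[OF fs'] by blast
    then have "riesz_seq gg UNIV" by (rule riesz)
    then show "riesz_seq g UNIV" by (simp add: geq)
  qed
  have n: "\<not> overcomplete_frame_seq g UNIV"
  proof
    assume "overcomplete_frame_seq g UNIV"
    then have fs: "frame_seq gg UNIV" and ex: "\<exists>j\<in>UNIV. frame_for gg (UNIV - {j}) (closed_span gg UNIV)"
      unfolding overcomplete_frame_seq_def geq by auto
    from ex obtain j0 where fj: "frame_for gg (UNIV - {j0}) (closed_span gg UNIV)" by blast
    obtain Af where "Af > 0" "\<And>x. Af \<le> pp x" using frame_low[OF fs] by blast
    then show False using fj by (rule not_over)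
  qed
  show ?thesis using b r n by blast
qed

end
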